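(* Consider the parametric multistage stochastic optimization problem described in the context, and assume: (A1) the noises $\mathbf{W}_1,\dots,\mathbf{W}_T$ are independent and each has finite support; (A2) (i) the problem is feasible, i.e. $\Phi(p)<+\infty$ for some $p\in\mathcal{P}_{\mathrm{ad}}$; (ii) each dynamics $f_t$ is affine in $(x,u)$; (iii) for all $t\in\{0,\dots,T-1\}$ and all $w\in\mathrm{Supp}(\mathbf{W}_{t+1})$, the function $L_t(\cdot,\cdot,w,\cdot)$ belongs to $\Gamma_{\mathcal{K}}[\mathbb{X}\times\mathbb{U},\mathbb{P}]$; (iv) $K\in\Gamma[\mathbb{X},\mathbb{P}]$. Then the parametric value functions $V_0,\dots,V_T$ are proper and belong to $\Gamma[\mathbb{X},\mathbb{P}]$. Moreover, suppose in addition that, for a given set $\mathcal{P}\subset\mathbb{P}$: (A3) for all $t\in\{0,\dots,T-1\}$ and all $w\in\mathrm{Supp}(\mathbf{W}_{t+1})$, $L_t(\cdot,\cdot,w,\cdot)\in\Theta_{\mathcal{K}}[\mathbb{X}\times\mathbb{U},\mathcal{P}]$, and $K\in\Theta[\mathbb{X},\mathcal{P}]$. Then: (a) the functions $V_0,\dots,V_T$ belong to $\Theta[\mathbb{X},\mathcal{P}]$ and, for all $p\in\mathrm{int}\,\mathcal{P}$, their gradients with respect to $p$ are given by the backward induction $$\nabla_pV_T(x,p)=\nabla_pK(x,p)\quad\forall x\in\mathrm{dom}\,V_T(\cdot,p),$$ and, for every $t\in\{0,\dots,T-1\}$ and all $x\in\mathrm{dom}\,V_t(\cdot,p)$, $$\nabla_pV_t(x,p)=\mathbb{E}\big[\nabla_pL_t(x,u^\star,\mathbf{W}_{t+1},p)+\nabla_pV_{t+1}\big(f_t(x,u^\star,\mathbf{W}_{t+1}),p\big)\big],$$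 where $u^\star$ is any control in the solution set $\mathcal{U}^\star_t(x,p)$; (b) for any closed convex subset $\mathcal{P}_{\mathrm{ad}}\subset\mathcal{P}$, the upstream problem $\min_{p\in\mathcal{P}_{\mathrm{ad}}}\Phi(p)$ is a convex differentiable optimization problem.
   Context: Setting: $T\ge1$ is an integer; $\mathbb{X}=\mathbb{R}^{n_x}$, $\mathbb{U}=\mathbb{R}^{n_u}$, $\mathbb{W}=\mathbb{R}^{n_w}$, $\mathbb{P}=\mathbb{R}^{n_p}$. On a probability space, $\mathbf{W}_1,\dots,\mathbf{W}_T$ are random variables with values in $\mathbb{W}$; $\mathrm{Supp}(\mathbf{W}_t)$ is the set of values taken with positive probability. Given are dynamics $f_t:\mathbb{X}\times\mathbb{U}\times\mathbb{W}\to\mathbb{X}$, stage costs $L_t:\mathbb{X}\times\mathbb{U}\times\mathbb{W}\times\mathbb{P}\to\,]-\infty,+\infty]$ ($t=0,\dots,T-1$), a final cost $K:\mathbb{X}\times\mathbb{P}\to\,]-\infty,+\infty]$, an initial state $x_0\in\mathbb{X}$ and an admissible parameter set $\mathcal{P}_{\mathrm{ad}}\subseteq\mathbb{P}$. For $p\in\mathbb{P}$, $\Phi(p)=\inf\mathbb{E}\big[\sum_{t=0}^{T-1}L_t(\mathbf{X}_t,\mathbf{U}_t,\mathbf{W}_{t+1},p)+K(\mathbf{X}_T,p)\big]$, the infimum being over random controls $\mathbf{U}_t$ measurable with respect to $\sigma(\mathbf{W}_1,\dots,\mathbf{W}_t)$ ($\mathbf{U}_0$ deterministic), with $\mathbf{X}_0=x_0$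 and $\mathbf{X}_{t+1}=f_t(\mathbf{X}_t,\mathbf{U}_t,\mathbf{W}_{t+1})$. The upstream problem is $\min_{p\in\mathcal{P}_{\mathrm{ad}}}\Phi(p)$. The parametric value functions are defined by $V_T(x,p)=K(x,p)$ and $V_t(x,p)=\inf_{u\in\mathbb{U}}Q_t(x,u,p)$, where $Q_t(x,u,p)=\mathbb{E}\big[L_t(x,u,\mathbf{W}_{t+1},p)+V_{t+1}(f_t(x,u,\mathbf{W}_{t+1}),p)\big]$; the solution set is $\mathcal{U}^\star_t(x,p)=\arg\min_{u\in\mathbb{U}}Q_t(x,u,p)$. Under (A1), $\Phi(p)=V_0(x_0,p)$. A function is proper if it never takes the value $-\infty$ and its effective domain $\mathrm{dom}\,g=\{g<+\infty\}$ is nonempty. Function classes: for a Euclidean space $\mathbb{Y}$, $\Gamma[\mathbb{Y},\mathbb{P}]$ is the set of lower semicontinuous convex functions $\mathbb{Y}\times\mathbb{P}\to\,]-\infty,+\infty]$. For $\mathcal{P}\subset\mathbb{P}$, $\Theta[\mathbb{Y},\mathcal{P}]$ is the set of $\theta\in\Gamma[\mathbb{Y},\mathbb{P}]$ with $\mathrm{dom}\,\theta=Y_\theta\times\mathcal{P}$ for some (possibly empty) $Y_\theta\subset\mathbb{Y}$ and such that $\theta(y,\cdot)$ is differentiable on $\mathrm{int}\,\mathcal{P}$ for each $y\in Y_\theta$. $\Gamma_{\mathcal{K}}[\mathbb{X}\times\mathbb{U},\mathbb{P}]$ is the set of $\gamma\in\Gamma[\mathbb{X}\times\mathbb{U},\mathbb{P}]$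 for which some compact $\mathcal{K}_\gamma\subset\mathbb{U}$ satisfies $\mathrm{dom}\,\gamma(x,\cdot,p)\subset\mathcal{K}_\gamma$ for all $(x,p)$; $\Theta_{\mathcal{K}}[\mathbb{X}\times\mathbb{U},\mathcal{P}]=\Theta[\mathbb{X}\times\mathbb{U},\mathcal{P}]\cap\Gamma_{\mathcal{K}}[\mathbb{X}\times\mathbb{U},\mathbb{P}]$. *)

theory Defs
  imports "HOL-Analysis.Analysis" "HOL-Probability.Probability_Mass_Function"
begin

text \<open>Functions Y x P -> ]-inf,+inf] are modelled curried, g :: 'y => 'p => ereal,
  together with the requirement that the value -inf is never taken.\<close>

definition edom :: "('y \<Rightarrow> 'p \<Rightarrow> ereal) \<Rightarrow> ('y \<times> 'p) set" where
  "edom g = {(y, p). g y p < \<infinity>}"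

definition lsc_fun :: "('y::topological_space \<Rightarrow> 'p::topological_space \<Rightarrow> ereal) \<Rightarrow> bool" where
  "lsc_fun g \<longleftrightarrow> (\<forall>c::real. closed {z. case_prod g z \<le> ereal c})"

definition econvex_fun :: "('y::real_vector \<Rightarrow> 'p::real_vector \<Rightarrow> ereal) \<Rightarrow> bool" where
  "econvex_fun g \<longleftrightarrow> (\<forall>z1 z2. \<forall>l::real. 0 < l \<and> l < 1 \<longrightarrow>
      case_prod g (l *\<^sub>R z1 + (1 - l) *\<^sub>R z2)
        \<le> ereal l * case_prod g z1 + ereal (1 - l) * case_prod g z2)"

definition Gamma_cls :: "('y::euclidean_space \<Rightarrow> 'p::euclidean_space \<Rightarrow> ereal) \<Rightarrow> bool" where
  "Gamma_cls g \<longleftrightarrow> (\<forall>y p. g y p \<noteq> -\<infinity>) \<and> lsc_fun g \<and> econvex_fun g"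

definition proper_fun :: "('y \<Rightarrow> 'p \<Rightarrow> ereal) \<Rightarrow> bool" where
  "proper_fun g \<longleftrightarrow> (\<forall>y p. g y p \<noteq> -\<infinity>) \<and> edom g \<noteq> {}"

definition Theta_cls :: "'p set \<Rightarrow> ('y::euclidean_space \<Rightarrow> 'p::euclidean_space \<Rightarrow> ereal) \<Rightarrow> bool" where
  "Theta_cls P g \<longleftrightarrow> Gamma_cls g \<and>
     (\<exists>Y. edom g = Y \<times> P \<and>
        (\<forall>y\<in>Y. \<forall>p\<in>interior P. (\<lambda>q. real_of_ereal (g y q)) differentiable (at p)))"

definition GammaK_cls :: "('x::euclidean_space \<times> 'u::euclidean_space \<Rightarrow> 'p::euclidean_space \<Rightarrow> ereal) \<Rightarrow> bool" where
  "GammaK_cls g \<longleftrightarrow> Gamma_cls g \<and>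
     (\<exists>Kc. compact Kc \<and> (\<forall>x p. {u. g (x, u) p < \<infinity>} \<subseteq> Kc))"

definition ThetaK_cls :: "'p set \<Rightarrow> ('x::euclidean_space \<times> 'u::euclidean_space \<Rightarrow> 'p::euclidean_space \<Rightarrow> ereal) \<Rightarrow> bool" where
  "ThetaK_cls P g \<longleftrightarrow> Theta_cls P g \<and> GammaK_cls g"

text \<open>Gradient with respect to the parameter p of theta(y,.) (meaningful where differentiable).\<close>
definition pgrad :: "('y \<Rightarrow> 'p::euclidean_space \<Rightarrow> ereal) \<Rightarrow> 'y \<Rightarrow> 'p \<Rightarrow> 'p" where
  "pgrad g y p = (SOME d. ((\<lambda>q. real_of_ereal (g y q)) has_derivative (\<lambda>h. d \<bullet> h)) (at p))"

text \<open>Noise W_t (t = 1..T) has law W t (a pmf); Supp(W_t) = set_pmf (W t).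
  Expectation of a function of W_{t+1} (finite support).\<close>
definition Expect :: "'w pmf \<Rightarrow> ('w \<Rightarrow> ereal) \<Rightarrow> ereal" where
  "Expect D g = (\<Sum>w\<in>set_pmf D. ereal (pmf D w) * g w)"

text \<open>Parametric value functions, by backward recursion; Vrec n is V_{T-n}.\<close>
primrec Vrec :: "nat \<Rightarrow> (nat \<Rightarrow> 'x \<Rightarrow> 'u \<Rightarrow> 'w \<Rightarrow> 'x)
    \<Rightarrow> (nat \<Rightarrow> 'x \<Rightarrow> 'u \<Rightarrow> 'w \<Rightarrow> 'p \<Rightarrow> ereal) \<Rightarrow> ('x \<Rightarrow> 'p \<Rightarrow> ereal)
    \<Rightarrow> (nat \<Rightarrow> 'w pmf) \<Rightarrow> nat \<Rightarrow> 'x \<Rightarrow> 'p \<Rightarrow> ereal" where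
  "Vrec T f L K W 0 = K"
| "Vrec T f L K W (Suc n) = (\<lambda>x p. INF u. Expect (W (T - n))
      (\<lambda>w. L (T - Suc n) x u w p + Vrec T f L K W n (f (T - Suc n) x u w) p))"

definition Vfun :: "nat \<Rightarrow> (nat \<Rightarrow> 'x \<Rightarrow> 'u \<Rightarrow> 'w \<Rightarrow> 'x)
    \<Rightarrow> (nat \<Rightarrow> 'x \<Rightarrow> 'u \<Rightarrow> 'w \<Rightarrow> 'p \<Rightarrow> ereal) \<Rightarrow> ('x \<Rightarrow> 'p \<Rightarrow> ereal)
    \<Rightarrow> (nat \<Rightarrow> 'w pmf) \<Rightarrow> nat \<Rightarrow> 'x \<Rightarrow> 'p \<Rightarrow> ereal" where
  "Vfun T f L K W t = Vrec T f L K W (T - t)"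

definition Qfun :: "nat \<Rightarrow> (nat \<Rightarrow> 'x \<Rightarrow> 'u \<Rightarrow> 'w \<Rightarrow> 'x)
    \<Rightarrow> (nat \<Rightarrow> 'x \<Rightarrow> 'u \<Rightarrow> 'w \<Rightarrow> 'p \<Rightarrow> ereal) \<Rightarrow> ('x \<Rightarrow> 'p \<Rightarrow> ereal)
    \<Rightarrow> (nat \<Rightarrow> 'w pmf) \<Rightarrow> nat \<Rightarrow> 'x \<Rightarrow> 'u \<Rightarrow> 'p \<Rightarrow> ereal" where
  "Qfun T f L K W t x u p = Expect (W (Suc t))
      (\<lambda>w. L t x u w p + Vfun T f L K W (Suc t) (f t x u w) p)"

definition Usol :: "nat \<Rightarrow> (nat \<Rightarrow> 'x \<Rightarrow> 'u \<Rightarrow> 'w \<Rightarrow> 'x)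
    \<Rightarrow> (nat \<Rightarrow> 'x \<Rightarrow> 'u \<Rightarrow> 'w \<Rightarrow> 'p \<Rightarrow> ereal) \<Rightarrow> ('x \<Rightarrow> 'p \<Rightarrow> ereal)
    \<Rightarrow> (nat \<Rightarrow> 'w pmf) \<Rightarrow> nat \<Rightarrow> 'x \<Rightarrow> 'p \<Rightarrow> 'u set" where
  "Usol T f L K W t x p = {u. \<forall>v. Qfun T f L K W t x u p \<le> Qfun T f L K W t x v p}"

text \<open>The original problem Phi(p), on the canonical probability space of noise paths
  omega = (omega 1, ..., omega T) with independent coordinates of laws W 1, ..., W T.
  A control policy pi gives U_t = pi t omega; it must be sigma(W_1..W_t)-measurable,
  i.e. depend only on omega 1, ..., omega t (U_0 is deterministic).\<close>
definition nonanticipative :: "nat \<Rightarrow> (nat \<Rightarrow> (nat \<Rightarrow> 'w) \<Rightarrow> 'u) \<Rightarrow> bool" where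
  "nonanticipative T pol \<longleftrightarrow> (\<forall>t<T. \<forall>\<omega> \<omega>'. (\<forall>s\<in>{1..t}. \<omega> s = \<omega>' s) \<longrightarrow> pol t \<omega> = pol t \<omega>')"

primrec state :: "(nat \<Rightarrow> 'x \<Rightarrow> 'u \<Rightarrow> 'w \<Rightarrow> 'x) \<Rightarrow> 'x \<Rightarrow> (nat \<Rightarrow> (nat \<Rightarrow> 'w) \<Rightarrow> 'u)
    \<Rightarrow> (nat \<Rightarrow> 'w) \<Rightarrow> nat \<Rightarrow> 'x" where
  "state f x0 pol \<omega> 0 = x0"
| "state f x0 pol \<omega> (Suc t) = f t (state f x0 pol \<omega> t) (pol t \<omega>) (\<omega> (Suc t))"

definition Phi :: "nat \<Rightarrow> (nat \<Rightarrow> 'x \<Rightarrow> 'u \<Rightarrow> 'w \<Rightarrow> 'x)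
    \<Rightarrow> (nat \<Rightarrow> 'x \<Rightarrow> 'u \<Rightarrow> 'w \<Rightarrow> 'p \<Rightarrow> ereal) \<Rightarrow> ('x \<Rightarrow> 'p \<Rightarrow> ereal)
    \<Rightarrow> (nat \<Rightarrow> 'w pmf) \<Rightarrow> 'x \<Rightarrow> 'p \<Rightarrow> ereal" where
  "Phi T f L K W x0 p = (INF pol \<in> {pol. nonanticipative T pol}.
     \<Sum>\<omega>\<in>PiE {1..T} (\<lambda>t. set_pmf (W t)).
       ereal (\<Prod>t\<in>{1..T}. pmf (W t) (\<omega> t)) *
       ((\<Sum>t<T. L t (state f x0 pol \<omega> t) (pol t \<omega>) (\<omega> (Suc t)) p)
         + K (state f x0 pol \<omega> T) p))"

definition affine_xu :: "('x::real_vector \<Rightarrow> 'u::real_vector \<Rightarrow> 'w \<Rightarrow> 'x) \<Rightarrow> bool" where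
  "affine_xu g \<longleftrightarrow> (\<forall>w. linear (\<lambda>(x, u). g x u w - g 0 0 w))"

end

theory Submission
  imports Defs
begin

definition cvx :: "('a::real_vector \<Rightarrow> ereal) \<Rightarrow> bool" where
  "cvx F \<longleftrightarrow> (\<forall>z1 z2. \<forall>l::real. 0 < l \<and> l < 1 \<longrightarrow>
      F (l *\<^sub>R z1 + (1 - l) *\<^sub>R z2) \<le> ereal l * F z1 + ereal (1 - l) * F z2)"

definition lscf :: "('a::topological_space \<Rightarrow> ereal) \<Rightarrow> bool" where
  "lscf F \<longleftrightarrow> (\<forall>c::real. closed {z. F z \<le> ereal c})"

definition lscp :: "('a::topological_space \<Rightarrow> ereal) \<Rightarrow> 'a \<Rightarrow> bool" where
  "lscp F z \<longleftrightarrow> (\<forall>y::real. ereal y < F z \<longrightarrow> eventually (\<lambda>x. ereal y < F x) (nhds z))"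

lemma lscf_iff: "lscf F \<longleftrightarrow> (\<forall>z. lscp F z)"
proof -
  have eq: "\<And>c. {z. F z \<le> ereal c} = - {z. ereal c < F z}" by auto
  have "closed {z. F z \<le> ereal c} \<longleftrightarrow> open {z. ereal c < F z}" for c
    unfolding eq by (simp add: closed_def)
  also have "open {z. ereal c < F z} \<longleftrightarrow> (\<forall>z. ereal c < F z \<longrightarrow> eventually (\<lambda>x. ereal c < F x) (nhds z))" for c
    by (simp add: open_subopen[of "{z. ereal c < F z}"] eventually_nhds subset_eq)
  finally show ?thesis unfolding lscf_def lscp_def by blast
qed

lemma sum_neq_minf: "(\<And>w. w \<in> A \<Longrightarrow> F w \<noteq> (-\<infinity>::ereal)) \<Longrightarrow> (\<Sum>w\<in>A. F w) \<noteq> -\<infinity>"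
  by (induct A rule: infinite_finite_induct) auto

lemma ereal_cmult_neq_minf: "c \<ge> 0 \<Longrightarrow> x \<noteq> -\<infinity> \<Longrightarrow> ereal c * x \<noteq> -\<infinity>"
  by (cases x) auto

lemma lscp_add:
  assumes "lscp F z" "lscp G z" "F z \<noteq> -\<infinity>" "G z \<noteq> -\<infinity>"
  shows "lscp (\<lambda>x. F x + G x) z"
  unfolding lscp_def
proof (intro allI impI)
  fix y :: real assume y: "ereal y < F z + G z"
  have "\<exists>a b::real. ereal a < F z \<and> ereal b < G z \<and> y \<le> a + b"
  proof (cases "F z"; cases "G z")
    fix r s assume r: "F z = ereal r" and s: "G z = ereal s"
    then show ?thesis using y
      by (intro exI[of _ "r - (r + s - y)/2"] exI[of _ "s - (r + s - y)/2"]) auto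
  next
    fix r assume r: "F z = ereal r" and s: "G z = \<infinity>"
    then show ?thesis by (intro exI[of _ "r - 1"] exI[of _ "y - r + 1"]) auto
  next
    fix s assume r: "F z = \<infinity>" and s: "G z = ereal s"
    then show ?thesis by (intro exI[of _ "y - s + 1"] exI[of _ "s - 1"]) auto
  next
    assume "F z = \<infinity>" "G z = \<infinity>" then show ?thesis by (intro exI[of _ y] exI[of _ 0]) auto
  qed (use assms in auto)
  then obtain a b :: real where ab: "ereal a < F z" "ereal b < G z" "y \<le> a + b" by blast
  have "eventually (\<lambda>x. ereal a < F x) (nhds z)" "eventually (\<lambda>x. ereal b < G x) (nhds z)"
    using assms(1,2) ab unfolding lscp_def by auto
  then show "eventually (\<lambda>x. ereal y < F x + G x) (nhds z)"
  proof eventually_elim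
    case (elim x)
    have "ereal a + ereal b < F x + G x" using elim by (rule ereal_add_strict_mono2)
    moreover have "ereal y \<le> ereal a + ereal b" using ab by simp
    ultimately show ?case by (meson order.strict_trans1)
  qed
qed

lemma lscp_cmult:
  assumes "c \<ge> 0" "lscp F z"
  shows "lscp (\<lambda>x. ereal c * F x) z"
proof (cases "c = 0")
  case True then show ?thesis by (simp add: lscp_def zero_ereal_def[symmetric])
next
  case False
  then have c: "c > 0" using assms by simp
  show ?thesis unfolding lscp_def
  proof (intro allI impI)
    fix y assume y: "ereal y < ereal c * F z"
    have "ereal (y / c) < F z" using y c by (cases "F z") (auto simp: field_simps)
    then have "eventually (\<lambda>x. ereal (y / c) < F x) (nhds z)" using assms(2) unfolding lscp_def by auto
    then show "eventually (\<lambda>x. ereal y < ereal c * F x) (nhds z)"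
    proof eventually_elim
      case (elim x) then show ?case using c by (cases "F x") (auto simp: field_simps)
    qed
  qed
qed

lemma lscp_sum:
  assumes "finite A" "\<And>w. w \<in> A \<Longrightarrow> lscp (F w) z" "\<And>w x. w \<in> A \<Longrightarrow> F w x \<noteq> -\<infinity>"
  shows "lscp (\<lambda>x. \<Sum>w\<in>A. F w x) z"
  using assms
proof (induct A rule: finite_induct)
  case empty then show ?case by (simp add: lscp_def)
next
  case (insert a A)
  have "lscp (\<lambda>x. F a x + (\<Sum>w\<in>A. F w x)) z"
    by (rule lscp_add) (use insert in \<open>auto intro!: sum_neq_minf\<close>)
  then show ?case using insert by simp
qed

lemma lscf_comp:
  assumes "lscf F" "continuous_on UNIV g"
  shows "lscf (\<lambda>x. F (g x))"
  unfolding lscf_def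
proof
  fix c
  have "closed (g -` {z. F z \<le> ereal c})"
    using assms unfolding lscf_def by (intro closed_vimage) (auto simp: continuous_on_eq_continuous_at)
  then show "closed {z. F (g z) \<le> ereal c}" by (simp add: vimage_def)
qed

lemma cvx_add:
  assumes "cvx F" "cvx G" "\<And>x. F x \<noteq> -\<infinity>" "\<And>x. G x \<noteq> -\<infinity>"
  shows "cvx (\<lambda>x. F x + G x)"
  unfolding cvx_def
proof (intro allI impI)
  fix z1 z2 :: 'a and l :: real assume l: "0 < l \<and> l < 1"
  let ?m = "l *\<^sub>R z1 + (1 - l) *\<^sub>R z2"
  have "F ?m + G ?m \<le> (ereal l * F z1 + ereal (1 - l) * F z2) + (ereal l * G z1 + ereal (1 - l) * G z2)"
    using assms(1,2) l unfolding cvx_def by (intro add_mono) auto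
  also have "\<dots> = ereal l * (F z1 + G z1) + ereal (1 - l) * (F z2 + G z2)"
  proof -
    have e1: "ereal l * (F z1 + G z1) = ereal l * F z1 + ereal l * G z1"
      using distrib_left_ereal_nn[of l "F z1" "G z1"] l by (simp add: mult.commute)
    have e2: "ereal (1 - l) * (F z2 + G z2) = ereal (1 - l) * F z2 + ereal (1 - l) * G z2"
      using distrib_left_ereal_nn[of "1 - l" "F z2" "G z2"] l by (simp add: mult.commute)
    show ?thesis unfolding e1 e2 by (simp add: add_ac)
  qed
  finally show "F ?m + G ?m \<le> ereal l * (F z1 + G z1) + ereal (1 - l) * (F z2 + G z2)" .
qed

lemma cvx_cmult:
  assumes "c \<ge> 0" "cvx F"
  shows "cvx (\<lambda>x. ereal c * F x)"
  unfolding cvx_def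
proof (intro allI impI)
  fix z1 z2 :: 'a and l :: real assume l: "0 < l \<and> l < 1"
  let ?m = "l *\<^sub>R z1 + (1 - l) *\<^sub>R z2"
  have "ereal c * F ?m \<le> ereal c * (ereal l * F z1 + ereal (1 - l) * F z2)"
    using assms l unfolding cvx_def by (intro ereal_mult_left_mono) auto
  also have "\<dots> = ereal l * (ereal c * F z1) + ereal (1 - l) * (ereal c * F z2)"
  proof -
    have "ereal c * (ereal l * F z1 + ereal (1 - l) * F z2) = (ereal l * F z1) * ereal c + (ereal (1 - l) * F z2) * ereal c"
      using assms(1) by (subst mult.commute) (rule distrib_left_ereal_nn)
    then show ?thesis by (simp add: mult_ac)
  qed
  finally show "ereal c * F ?m \<le> ereal l * (ereal c * F z1) + ereal (1 - l) * (ereal c * F z2)" .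
qed

lemma cvx_sum:
  assumes "finite A" "\<And>w. w \<in> A \<Longrightarrow> cvx (F w)" "\<And>w x. w \<in> A \<Longrightarrow> F w x \<noteq> -\<infinity>"
  shows "cvx (\<lambda>x. \<Sum>w\<in>A. F w x)"
  using assms
proof (induct A rule: finite_induct)
  case empty then show ?case by (simp add: cvx_def)
next
  case (insert a A)
  have "cvx (\<lambda>x. F a x + (\<Sum>w\<in>A. F w x))"
    by (rule cvx_add) (use insert in \<open>auto intro!: sum_neq_minf\<close>)
  then show ?case using insert by simp
qed

lemma cvx_comp:
  assumes "cvx F" "\<And>z1 z2 l. g (l *\<^sub>R z1 + (1 - l) *\<^sub>R z2) = l *\<^sub>R g z1 + (1 - l) *\<^sub>R g z2"
  shows "cvx (\<lambda>x. F (g x))"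
  using assms unfolding cvx_def by simp


lemma lsc_attain:
  fixes Fq :: "'a::euclidean_space \<Rightarrow> ereal"
  assumes clo: "\<And>c::real. closed {u. Fq u \<le> ereal c}" and "compact Kc"
    and dom: "\<And>u. Fq u < \<infinity> \<Longrightarrow> u \<in> Kc"
  shows "\<exists>u. Fq u = (INF v. Fq v)"
proof (cases "(INF v. Fq v) = \<infinity>")
  case True then show ?thesis by (metis INF_lower UNIV_I top.extremum_uniqueI top_ereal_def)
next
  case False
  let ?m = "INF v. Fq v"
  let ?f = "\<lambda>c. {u. Fq u \<le> ereal c}"
  let ?A = "{c. ?m < ereal c}"
  have "Kc \<inter> \<Inter>(?f ` ?A) \<noteq> {}"
  proof (rule compact_imp_fip[OF \<open>compact Kc\<close>])
    show "\<And>T. T \<in> ?f ` ?A \<Longrightarrow> closed T" using clo by auto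
  next
    fix F' assume F': "finite F'" "F' \<subseteq> ?f ` ?A"
    then obtain C where C: "C \<subseteq> ?A" "finite C" "F' = ?f ` C" by (meson finite_subset_image)
    show "Kc \<inter> \<Inter>F' \<noteq> {}"
    proof (cases "C = {}")
      case True
      from False obtain u where "Fq u < \<infinity>" by (metis INF_less_iff less_ereal.simps(4) less_top top_ereal_def)
      then have "u \<in> Kc" using dom by auto
      then show ?thesis using True C by auto
    next
      case nE: False
      let ?c0 = "Min C"
      have "?c0 \<in> C" using nE C by auto
      then have "?m < ereal ?c0" using C by auto
      then obtain u where u: "Fq u < ereal ?c0" by (meson INF_less_iff)
      then have "u \<in> Kc" using dom by (metis ereal_infty_less(1) less_ereal.simps(4) order.strict_trans)
      moreover have "Fq u \<le> ereal c" if "c \<in> C" for c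
        using u that C(2) by (meson Min_le ereal_less_eq(3) less_imp_le order_less_le_trans)
      ultimately show ?thesis using C by auto
    qed
  qed
  then obtain u where u: "\<And>c. ?m < ereal c \<Longrightarrow> Fq u \<le> ereal c" by auto
  have "Fq u \<le> ?m"
  proof (rule ccontr)
    assume "\<not> Fq u \<le> ?m"
    then have "?m < Fq u" by simp
    then obtain z where "?m < ereal z" "ereal z < Fq u" using ereal_dense2 by blast
    then show False using u by fastforce
  qed
  moreover have "?m \<le> Fq u" by (rule INF_lower) simp
  ultimately show ?thesis by (intro exI[of _ u]) simp
qed

lemma sandwich_deriv:
  fixes v \<phi> :: "'a::euclidean_space \<Rightarrow> real"
  assumes U: "open U" "p \<in> U"
    and mid: "\<And>h. p + h \<in> U \<Longrightarrow> p - h \<in> U \<Longrightarrow> 2 * v p \<le> v (p + h) + v (p - h)"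
    and le: "\<And>q. q \<in> U \<Longrightarrow> v q \<le> \<phi> q" and eq: "v p = \<phi> p"
    and d: "(\<phi> has_derivative D) (at p)"
  shows "(v has_derivative D) (at p)"
proof -
  have bl: "bounded_linear D" using d by (rule has_derivative_bounded_linear)
  interpret D: bounded_linear D by fact
  define r where "r h = \<phi> (p + h) - \<phi> p - D h" for h
  have T: "((\<lambda>h. norm (r h) / norm h) \<longlongrightarrow> 0) (at 0)"
    using d unfolding has_derivative_at r_def by simp
  have "((\<lambda>h. norm (r h) / norm h) \<longlongrightarrow> 0) (filtermap uminus (at 0))"
  proof -
    have fm: "filtermap uminus (at (0::'a)) = at 0" using filtermap_at_minus[of "0::'a"] by simp
    show ?thesis by (simp only: fm) (rule T)
  qed
  then have T2: "((\<lambda>h. norm (r (- h)) / norm h) \<longlongrightarrow> 0) (at 0)"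
    by (simp add: tendsto_compose_filtermap[symmetric] o_def)
  obtain e where e: "e > 0" "ball p e \<subseteq> U" using U open_contains_ball by blast
  have ev: "eventually (\<lambda>h. norm h < e) (at (0::'a))"
    using e(1) by (auto simp: eventually_at dist_norm intro!: exI[of _ e])
  have "((\<lambda>h. norm (v (p + h) - v p - D h) / norm h) \<longlongrightarrow> 0) (at 0)"
  proof (rule Lim_null_comparison)
    show "((\<lambda>h. norm (r h) / norm h + norm (r (- h)) / norm h) \<longlongrightarrow> 0) (at 0)"
      using tendsto_add_zero[OF T T2] .
    show "eventually (\<lambda>h. norm (norm (v (p + h) - v p - D h) / norm h)
              \<le> norm (r h) / norm h + norm (r (- h)) / norm h) (at 0)"
      using ev
    proof eventually_elim
      case (elim h)
      have in1: "p + h \<in> U" "p - h \<in> U" using elim e by (auto simp: dist_norm)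
      have a: "v (p + h) - v p - D h \<le> r h" using le[OF in1(1)] eq by (simp add: r_def)
      have b: "v (p - h) - v p - D (- h) \<le> r (- h)" using le[OF in1(2)] eq by (simp add: r_def)
      have c: "0 \<le> (v (p + h) - v p - D h) + (v (p - h) - v p - D (- h))"
        using mid[OF in1] D.neg by simp
      have "\<bar>v (p + h) - v p - D h\<bar> \<le> \<bar>r h\<bar> + \<bar>r (- h)\<bar>" using a b c by linarith
      then show ?case by (simp add: add_divide_distrib[symmetric] divide_right_mono)
    qed
  qed
  then show ?thesis using bl unfolding has_derivative_at by simp
qed

lemma grad_repr:
  fixes g :: "'a::euclidean_space \<Rightarrow> real"
  assumes "(g has_derivative D) F"
  shows "(g has_derivative (\<lambda>h. (\<Sum>i\<in>Basis. D i *\<^sub>R i) \<bullet> h)) F"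
proof -
  have lin: "linear D" using assms has_derivative_linear by blast
  have "D h = (\<Sum>i\<in>Basis. D i *\<^sub>R i) \<bullet> h" for h
  proof -
    have "D h = D (\<Sum>i\<in>Basis. (h \<bullet> i) *\<^sub>R i)" by (simp add: euclidean_representation)
    also have "\<dots> = (\<Sum>i\<in>Basis. (h \<bullet> i) * D i)" by (simp add: linear_sum[OF lin] linear_scale[OF lin])
    also have "\<dots> = h \<bullet> (\<Sum>i\<in>Basis. D i *\<^sub>R i)" by (auto simp: inner_sum_right intro!: sum.cong)
    also have "\<dots> = (\<Sum>i\<in>Basis. D i *\<^sub>R i) \<bullet> h" by (rule inner_commute)
    finally show ?thesis .
  qed
  then have Dh: "D = (\<lambda>h. (\<Sum>i\<in>Basis. D i *\<^sub>R i) \<bullet> h)" by (rule ext)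
  show ?thesis by (rule has_derivative_eq_rhs[OF assms Dh])
qed

lemma pgrad_eq:
  assumes "((\<lambda>q. real_of_ereal (g y q)) has_derivative (\<lambda>h. d \<bullet> h)) (at p)"
  shows "pgrad g y p = d"
proof -
  let ?P = "\<lambda>d. ((\<lambda>q. real_of_ereal (g y q)) has_derivative (\<lambda>h. d \<bullet> h)) (at p)"
  have "?P (SOME d. ?P d)" using assms by (rule someI)
  then have "(\<lambda>h. (SOME d. ?P d) \<bullet> h) = (\<lambda>h. d \<bullet> h)" using assms by (rule has_derivative_unique)
  then have "(SOME d. ?P d) \<bullet> ((SOME d. ?P d) - d) = d \<bullet> ((SOME d. ?P d) - d)" by metis
  then have "((SOME d. ?P d) - d) \<bullet> ((SOME d. ?P d) - d) = 0" by (simp add: inner_diff_left)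
  then show ?thesis unfolding pgrad_def by simp
qed

lemma pgrad_works:
  assumes "(\<lambda>q. real_of_ereal (g y q)) differentiable (at p)"
  shows "((\<lambda>q. real_of_ereal (g y q)) has_derivative (\<lambda>h. pgrad g y p \<bullet> h)) (at p)"
proof -
  obtain D where "((\<lambda>q. real_of_ereal (g y q)) has_derivative D) (at p)"
    using assms unfolding differentiable_def by blast
  from grad_repr[OF this] have "\<exists>d. ((\<lambda>q. real_of_ereal (g y q)) has_derivative (\<lambda>h. d \<bullet> h)) (at p)" by blast
  then obtain d where d: "((\<lambda>q. real_of_ereal (g y q)) has_derivative (\<lambda>h. d \<bullet> h)) (at p)" ..
  then show ?thesis using pgrad_eq[of g y d p, OF d] by simp
qed


primrec optst :: "(nat \<Rightarrow> 'x \<Rightarrow> 'u) \<Rightarrow> (nat \<Rightarrow> 'x \<Rightarrow> 'u \<Rightarrow> 'w \<Rightarrow> 'x) \<Rightarrow> 'x \<Rightarrow> (nat \<Rightarrow> 'w) \<Rightarrow> nat \<Rightarrow> 'x" where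
  "optst sel f x0 \<omega> 0 = x0"
| "optst sel f x0 \<omega> (Suc t) = f t (optst sel f x0 \<omega> t) (sel t (optst sel f x0 \<omega> t)) (\<omega> (Suc t))"

definition optpol :: "(nat \<Rightarrow> 'x \<Rightarrow> 'u) \<Rightarrow> (nat \<Rightarrow> 'x \<Rightarrow> 'u \<Rightarrow> 'w \<Rightarrow> 'x) \<Rightarrow> 'x \<Rightarrow> nat \<Rightarrow> (nat \<Rightarrow> 'w) \<Rightarrow> 'u" where
  "optpol sel f x0 t \<omega> = sel t (optst sel f x0 \<omega> t)"

lemma state_optpol: "state f x0 (optpol sel f x0) \<omega> t = optst sel f x0 \<omega> t"
  by (induct t) (simp_all add: optpol_def)

lemma optst_agree: "(\<forall>s\<in>{1..t}. \<omega> s = \<omega>' s) \<Longrightarrow> optst sel f x0 \<omega> t = optst sel f x0 \<omega>' t"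
  by (induct t) auto

lemma optpol_na: "nonanticipative T (optpol sel f x0)"
  unfolding nonanticipative_def optpol_def using optst_agree by metis

lemma state_agree:
  assumes "nonanticipative T pol"
  shows "t \<le> T \<Longrightarrow> (\<forall>s\<in>{1..t}. \<omega> s = \<omega>' s) \<Longrightarrow> state f x0 pol \<omega> t = state f x0 pol \<omega>' t"
proof (induct t)
  case 0 then show ?case by simp
next
  case (Suc t)
  have "pol t \<omega> = pol t \<omega>'" using assms Suc.prems unfolding nonanticipative_def by auto
  then show ?case using Suc by auto
qed

lemma ereal_sum_cmult: "c \<ge> 0 \<Longrightarrow> ereal c * (\<Sum>x\<in>A. g x) = (\<Sum>x\<in>A. ereal c * g x)"
  using sum_distrib_right_ereal[of c g A] by (simp add: mult.commute)

lemma ereal_cmult_add: "c \<ge> 0 \<Longrightarrow> ereal c * (a + b) = ereal c * a + ereal c * b"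
  using distrib_left_ereal_nn[of c a b] by (simp add: mult.commute)

locale prob =
  fixes T :: nat
    and f :: "nat \<Rightarrow> 'x::euclidean_space \<Rightarrow> 'u::euclidean_space \<Rightarrow> 'w::euclidean_space \<Rightarrow> 'x"
    and L :: "nat \<Rightarrow> 'x \<Rightarrow> 'u \<Rightarrow> 'w \<Rightarrow> 'p::euclidean_space \<Rightarrow> ereal"
    and K :: "'x \<Rightarrow> 'p \<Rightarrow> ereal"
    and W :: "nat \<Rightarrow> 'w pmf"
  assumes L_ninf: "\<And>t x u w p. L t x u w p \<noteq> -\<infinity>"
    and K_ninf: "\<And>x p. K x p \<noteq> -\<infinity>"
    and A1: "\<And>t. t \<in> {1..T} \<Longrightarrow> finite (set_pmf (W t))"
begin

abbreviation "V \<equiv> Vfun T f L K W"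
abbreviation "Q \<equiv> Qfun T f L K W"
abbreviation "US \<equiv> Usol T f L K W"
abbreviation "S t \<equiv> set_pmf (W (Suc t))"
abbreviation "pw t w \<equiv> pmf (W (Suc t)) w"

lemma V_T: "V T = K"
  by (simp add: Vfun_def)

lemma V_step: "t < T \<Longrightarrow> V t x p = (INF u. Q t x u p)"
proof -
  assume t: "t < T"
  then have e: "T - t = Suc (T - Suc t)" "T - (T - Suc t) = Suc t" "T - Suc (T - Suc t) = t" by auto
  show ?thesis unfolding Vfun_def Qfun_def e(1) Vrec.simps e(2) e(3) by simp
qed

lemma Q_eq: "Q t x u p = (\<Sum>w\<in>S t. ereal (pw t w) * (L t x u w p + V (Suc t) (f t x u w) p))"
  by (simp add: Qfun_def Expect_def)

lemma finS: "t < T \<Longrightarrow> finite (S t)"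
  using A1[of "Suc t"] by auto

lemma S_ne: "S t \<noteq> {}" by (rule set_pmf_not_empty)

lemma pw_pos: "w \<in> S t \<Longrightarrow> pw t w > 0"
  by (simp add: pmf_positive)

lemma Q_le_iff_US: "u \<in> US t x p \<longleftrightarrow> (\<forall>v. Q t x u p \<le> Q t x v p)"
  by (simp add: Usol_def)

lemma US_eq: "t < T \<Longrightarrow> u \<in> US t x p \<Longrightarrow> Q t x u p = V t x p"
  unfolding V_step Usol_def by (auto intro!: antisym INF_greatest INF_lower)

lemma V_le_Q: "t < T \<Longrightarrow> V t x p \<le> Q t x u p"
  unfolding V_step by (rule INF_lower) simp

lemma US_of_eq: "t < T \<Longrightarrow> Q t x u p = V t x p \<Longrightarrow> u \<in> US t x p"
  unfolding Usol_def using V_le_Q by auto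

definition "Om k = PiE {Suc k..T} (\<lambda>s. set_pmf (W s))"
definition "pr k \<omega> = (\<Prod>s\<in>{Suc k..T}. pmf (W s) (\<omega> s))"
definition "Et k G = (\<Sum>\<omega>\<in>Om k. ereal (pr k \<omega>) * G \<omega>)"
definition "mrg k h \<omega> = (\<lambda>s. if k < s then \<omega> s else h s)"
definition "Cc x0 pol p k \<omega> = (\<Sum>s\<in>{k..<T}. L s (state f x0 pol \<omega> s) (pol s \<omega>) (\<omega> (Suc s)) p) + K (state f x0 pol \<omega> T) p"

lemma pr_nonneg: "pr k \<omega> \<ge> 0"
  unfolding pr_def by (auto intro: prod_nonneg)

lemma finOm: "finite (Om k)"
  unfolding Om_def by (rule finite_PiE) (use A1 in auto)

lemma sum_pr: "(\<Sum>\<omega>\<in>Om k. pr k \<omega>) = 1"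
proof -
  have "(\<Sum>\<omega>\<in>Om k. pr k \<omega>) = (\<Prod>s\<in>{Suc k..T}. \<Sum>y\<in>set_pmf (W s). pmf (W s) y)"
    unfolding Om_def pr_def by (rule prod_sum_PiE[symmetric]) (use A1 in auto)
  also have "\<dots> = 1"
    by (rule prod.neutral) (use A1 in \<open>auto intro!: sum_pmf_eq_1\<close>)
  finally show ?thesis .
qed

lemma Et_const_add: "Et k (\<lambda>\<omega>. a + G \<omega>) = a + Et k G"
proof -
  have "Et k (\<lambda>\<omega>. a + G \<omega>) = (\<Sum>\<omega>\<in>Om k. ereal (pr k \<omega>) * a + ereal (pr k \<omega>) * G \<omega>)"
    unfolding Et_def by (intro sum.cong refl ereal_cmult_add pr_nonneg)
  also have "\<dots> = (\<Sum>\<omega>\<in>Om k. ereal (pr k \<omega>) * a) + Et k G"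
    unfolding Et_def by (rule sum.distrib)
  also have "(\<Sum>\<omega>\<in>Om k. ereal (pr k \<omega>) * a) = (\<Sum>\<omega>\<in>Om k. ereal (pr k \<omega>)) * a"
    by (rule sum_ereal_left_distrib[symmetric]) (simp add: pr_nonneg)
  also have "\<dots> = a" using sum_pr[of k] by simp
  finally show ?thesis .
qed

lemma Et_mono: "(\<And>\<omega>. \<omega> \<in> Om k \<Longrightarrow> G \<omega> \<le> H \<omega>) \<Longrightarrow> Et k G \<le> Et k H"
  unfolding Et_def by (intro sum_mono ereal_mult_left_mono) (auto simp: pr_nonneg)

lemma Et_cong: "(\<And>\<omega>. \<omega> \<in> Om k \<Longrightarrow> G \<omega> = H \<omega>) \<Longrightarrow> Et k G = Et k H"
  unfolding Et_def by (intro sum.cong) auto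

lemma Et_T: "Et T G = G (\<lambda>_. undefined)"
  by (simp add: Et_def Om_def pr_def)

lemma Et_split:
  assumes k: "k < T"
  shows "Et k G = (\<Sum>w\<in>S k. ereal (pw k w) * Et (Suc k) (\<lambda>\<omega>. G (fun_upd \<omega> (Suc k) w)))"
proof -
  have iv: "{Suc k..T} = insert (Suc k) {Suc (Suc k)..T}" using k by auto
  have nin: "Suc k \<notin> {Suc (Suc k)..T}" by simp
  have Om_eq: "Om k = (\<lambda>(y, g). g(Suc k := y)) ` (S k \<times> Om (Suc k))"
    unfolding Om_def iv PiE_insert_eq by simp
  have inj: "inj_on (\<lambda>(y, g). g(Suc k := y)) (S k \<times> Om (Suc k))"
    unfolding Om_def using inj_combinator[OF nin, of "\<lambda>s. set_pmf (W s)"] by simp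
  have prs: "pr k (g(Suc k := y)) = pw k y * pr (Suc k) g" for g y
  proof -
    have "pr k (g(Suc k := y)) = pw k y * (\<Prod>s\<in>{Suc (Suc k)..T}. pmf (W s) ((g(Suc k := y)) s))"
      unfolding pr_def iv by (subst prod.insert) auto
    also have "(\<Prod>s\<in>{Suc (Suc k)..T}. pmf (W s) ((g(Suc k := y)) s)) = pr (Suc k) g"
      unfolding pr_def by (intro prod.cong) auto
    finally show ?thesis .
  qed
  have "Et k G = (\<Sum>(y, g)\<in>S k \<times> Om (Suc k). ereal (pr k (g(Suc k := y))) * G (g(Suc k := y)))"
    unfolding Et_def Om_eq by (subst sum.reindex[OF inj]) (simp add: case_prod_unfold)
  also have "\<dots> = (\<Sum>y\<in>S k. \<Sum>g\<in>Om (Suc k). ereal (pw k y) * (ereal (pr (Suc k) g) * G (g(Suc k := y))))"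
    by (subst sum.cartesian_product[symmetric]) (simp add: prs mult.assoc[symmetric])
  also have "\<dots> = (\<Sum>w\<in>S k. ereal (pw k w) * Et (Suc k) (\<lambda>\<omega>. G (fun_upd \<omega> (Suc k) w)))"
    unfolding Et_def by (intro sum.cong refl ereal_sum_cmult[symmetric]) simp
  finally show ?thesis .
qed

lemma mrg_upd: "mrg k h (fun_upd \<omega> (Suc k) w) = mrg (Suc k) (h(Suc k := w)) \<omega>"
  unfolding mrg_def by (rule ext) auto

lemma DP:
  assumes na: "nonanticipative T pol" and kT: "k \<le> T"
  shows "V k (state f x0 pol h k) p \<le> Et k (\<lambda>\<omega>. Cc x0 pol p k (mrg k h \<omega>))
     \<and> ((\<forall>t<T. \<forall>\<omega>. pol t \<omega> \<in> US t (state f x0 pol \<omega> t) p) \<longrightarrow>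
          V k (state f x0 pol h k) p = Et k (\<lambda>\<omega>. Cc x0 pol p k (mrg k h \<omega>)))"
  using kT
proof (induction k arbitrary: h rule: inc_induct)
  case base
  have "state f x0 pol (mrg T h (\<lambda>_. undefined)) T = state f x0 pol h T"
    by (rule state_agree[OF na]) (auto simp: mrg_def)
  then show ?case by (simp add: Et_T V_T Cc_def)
next
  case (step k)
  let ?x = "state f x0 pol h k" and ?u = "pol k h"
  define a where "a w = L k ?x ?u w p" for w
  define h' where "h' w = h(Suc k := w)" for w
  have ag: "\<forall>s\<in>{1..k}. mrg (Suc k) (h' w) \<omega> s = h s" for w \<omega>
    by (auto simp: mrg_def h'_def)
  have Cc_split: "Cc x0 pol p k (mrg (Suc k) (h' w) \<omega>) = a w + Cc x0 pol p (Suc k) (mrg (Suc k) (h' w) \<omega>)" for w \<omega>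
  proof -
    have st: "state f x0 pol (mrg (Suc k) (h' w) \<omega>) k = ?x"
      by (rule state_agree[OF na]) (use step ag in auto)
    have po: "pol k (mrg (Suc k) (h' w) \<omega>) = ?u"
      using na step ag unfolding nonanticipative_def by auto
    have wv: "mrg (Suc k) (h' w) \<omega> (Suc k) = w" by (simp add: mrg_def h'_def)
    show ?thesis
      unfolding Cc_def using step(2)
      by (simp add: sum.atLeast_Suc_lessThan st po wv a_def add.assoc)
  qed
  have st1: "state f x0 pol (h' w) (Suc k) = f k ?x ?u w" for w
  proof -
    have "state f x0 pol (h' w) k = ?x" by (rule state_agree[OF na]) (use step in \<open>auto simp: h'_def\<close>)
    moreover have "pol k (h' w) = ?u" using na step unfolding nonanticipative_def by (auto simp: h'_def)
    ultimately show ?thesis by (simp add: h'_def)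
  qed
  have E: "Et k (\<lambda>\<omega>. Cc x0 pol p k (mrg k h \<omega>))
      = (\<Sum>w\<in>S k. ereal (pw k w) * (a w + Et (Suc k) (\<lambda>\<omega>. Cc x0 pol p (Suc k) (mrg (Suc k) (h' w) \<omega>))))"
    unfolding Et_split[OF step(2)] mrg_upd h'_def[symmetric] Cc_split Et_const_add ..
  have IH: "V (Suc k) (f k ?x ?u w) p \<le> Et (Suc k) (\<lambda>\<omega>. Cc x0 pol p (Suc k) (mrg (Suc k) (h' w) \<omega>))
     \<and> ((\<forall>t<T. \<forall>\<omega>. pol t \<omega> \<in> US t (state f x0 pol \<omega> t) p) \<longrightarrow>
          V (Suc k) (f k ?x ?u w) p = Et (Suc k) (\<lambda>\<omega>. Cc x0 pol p (Suc k) (mrg (Suc k) (h' w) \<omega>)))" for w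
    using step.IH[of "h' w"] st1[of w] by simp
  have QE: "Q k ?x ?u p \<le> Et k (\<lambda>\<omega>. Cc x0 pol p k (mrg k h \<omega>))"
    unfolding E Q_eq a_def[symmetric]
    by (intro sum_mono ereal_mult_left_mono add_left_mono) (simp_all add: IH[THEN conjunct1])
  have "V k ?x p \<le> Et k (\<lambda>\<omega>. Cc x0 pol p k (mrg k h \<omega>))"
    using V_le_Q[OF step(2)] QE by (rule order_trans)
  moreover have "V k ?x p = Et k (\<lambda>\<omega>. Cc x0 pol p k (mrg k h \<omega>))"
    if opt: "\<forall>t<T. \<forall>\<omega>. pol t \<omega> \<in> US t (state f x0 pol \<omega> t) p"
  proof -
    have "Q k ?x ?u p = Et k (\<lambda>\<omega>. Cc x0 pol p k (mrg k h \<omega>))"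
      unfolding E Q_eq a_def[symmetric]
      by (intro sum.cong refl arg_cong2[where f="(*)"] arg_cong2[where f="(+)"]) (simp add: IH[THEN conjunct2, THEN mp, OF opt])
    moreover have "Q k ?x ?u p = V k ?x p" using opt step(2) by (intro US_eq) auto
    ultimately show ?thesis by simp
  qed
  ultimately show ?case by blast
qed

lemma cost_eq:
  assumes na: "nonanticipative T pol"
  shows "(\<Sum>\<omega>\<in>PiE {1..T} (\<lambda>t. set_pmf (W t)).
       ereal (\<Prod>t\<in>{1..T}. pmf (W t) (\<omega> t)) *
       ((\<Sum>t<T. L t (state f x0 pol \<omega> t) (pol t \<omega>) (\<omega> (Suc t)) p) + K (state f x0 pol \<omega> T) p))
    = Et 0 (\<lambda>\<omega>. Cc x0 pol p 0 (mrg 0 h \<omega>))"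
proof -
  have Om0: "Om 0 = PiE {1..T} (\<lambda>t. set_pmf (W t))" by (simp add: Om_def One_nat_def)
  have pr0: "pr 0 \<omega> = (\<Prod>t\<in>{1..T}. pmf (W t) (\<omega> t))" for \<omega> by (simp add: pr_def One_nat_def)
  show ?thesis unfolding Et_def Om0 pr0
proof (intro sum.cong refl)
  fix \<omega> assume "\<omega> \<in> PiE {1..T} (\<lambda>t. set_pmf (W t))"
  have ag: "\<forall>s\<in>{1..t}. mrg 0 h \<omega> s = \<omega> s" for t by (auto simp: mrg_def)
  have st: "t \<le> T \<Longrightarrow> state f x0 pol (mrg 0 h \<omega>) t = state f x0 pol \<omega> t" for t
    by (rule state_agree[OF na]) (use ag in auto)
  have po: "t < T \<Longrightarrow> pol t (mrg 0 h \<omega>) = pol t \<omega>" for t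
    using na ag unfolding nonanticipative_def by blast
  have "Cc x0 pol p 0 (mrg 0 h \<omega>) = (\<Sum>t<T. L t (state f x0 pol \<omega> t) (pol t \<omega>) (\<omega> (Suc t)) p) + K (state f x0 pol \<omega> T) p"
  proof -
    have om: "mrg 0 h \<omega> (Suc t) = \<omega> (Suc t)" for t by (simp add: mrg_def)
    show ?thesis
      unfolding Cc_def atLeast0LessThan by (intro arg_cong2[where f="(+)"] sum.cong) (auto simp: st po om)
  qed
  then show "ereal (\<Prod>t\<in>{1..T}. pmf (W t) (\<omega> t)) *
       ((\<Sum>t<T. L t (state f x0 pol \<omega> t) (pol t \<omega>) (\<omega> (Suc t)) p) + K (state f x0 pol \<omega> T) p)
     = ereal (\<Prod>t\<in>{1..T}. pmf (W t) (\<omega> t)) * Cc x0 pol p 0 (mrg 0 h \<omega>)" by simp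
qed
qed

lemma Phi_ge: "V 0 x0 p \<le> Phi T f L K W x0 p"
  unfolding Phi_def
proof (rule INF_greatest)
  fix pol :: "nat \<Rightarrow> (nat \<Rightarrow> 'w) \<Rightarrow> 'u" assume "pol \<in> {pol. nonanticipative T pol}"
  then have na: "nonanticipative T pol" by simp
  have "V 0 x0 p = V 0 (state f x0 pol h 0) p" for h by simp
  then show "V 0 x0 p \<le> (\<Sum>\<omega>\<in>PiE {1..T} (\<lambda>t. set_pmf (W t)).
       ereal (\<Prod>t\<in>{1..T}. pmf (W t) (\<omega> t)) *
       ((\<Sum>t<T. L t (state f x0 pol \<omega> t) (pol t \<omega>) (\<omega> (Suc t)) p) + K (state f x0 pol \<omega> T) p))"
    unfolding cost_eq[OF na, of _ _ undefined] using DP[OF na, of 0 x0 undefined p] by simp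
qed

lemma Phi_eq:
  assumes ne: "\<And>t x. t < T \<Longrightarrow> US t x p \<noteq> {}"
  shows "Phi T f L K W x0 p = V 0 x0 p"
proof (rule antisym[OF _ Phi_ge])
  define sel where "sel t x = (SOME u. u \<in> US t x p)" for t x
  let ?pol = "optpol sel f x0"
  have na: "nonanticipative T ?pol" by (rule optpol_na)
  have opt: "\<forall>t<T. \<forall>\<omega>. ?pol t \<omega> \<in> US t (state f x0 ?pol \<omega> t) p"
  proof (intro allI impI)
    fix t \<omega> assume t: "t < T"
    have "\<exists>u. u \<in> US t (optst sel f x0 \<omega> t) p" using ne[OF t] by blast
    then have "sel t (optst sel f x0 \<omega> t) \<in> US t (optst sel f x0 \<omega> t) p"
      unfolding sel_def by (rule someI_ex)
    then show "?pol t \<omega> \<in> US t (state f x0 ?pol \<omega> t) p"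
      unfolding state_optpol optpol_def .
  qed
  have "Phi T f L K W x0 p \<le> (\<Sum>\<omega>\<in>PiE {1..T} (\<lambda>t. set_pmf (W t)).
       ereal (\<Prod>t\<in>{1..T}. pmf (W t) (\<omega> t)) *
       ((\<Sum>t<T. L t (state f x0 ?pol \<omega> t) (?pol t \<omega>) (\<omega> (Suc t)) p) + K (state f x0 ?pol \<omega> T) p))"
    unfolding Phi_def by (rule INF_lower) (simp add: na)
  also have "\<dots> = V 0 x0 p"
    unfolding cost_eq[OF na, of _ _ undefined] using DP[OF na, of 0 x0 undefined p] opt by simp
  finally show "Phi T f L K W x0 p \<le> V 0 x0 p" .
qed

end


lemma econvex_cvx: "econvex_fun g \<longleftrightarrow> cvx (case_prod g)"
  unfolding econvex_fun_def cvx_def by simp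

lemma lsc_fun_lscf: "lsc_fun g \<longleftrightarrow> lscf (case_prod g)"
  unfolding lsc_fun_def lscf_def by simp

lemma aff_comb:
  assumes "affine_xu g"
  shows "g (l *\<^sub>R x1 + (1 - l) *\<^sub>R x2) (l *\<^sub>R u1 + (1 - l) *\<^sub>R u2) w
       = l *\<^sub>R g x1 u1 w + (1 - l) *\<^sub>R g x2 u2 w"
proof -
  let ?A = "\<lambda>(x, u). g x u w - g 0 0 w"
  have lin: "linear ?A" using assms unfolding affine_xu_def by blast
  have "?A (l *\<^sub>R (x1, u1) + (1 - l) *\<^sub>R (x2, u2)) = ?A (l *\<^sub>R (x1, u1)) + ?A ((1 - l) *\<^sub>R (x2, u2))"
    by (rule linear_add[OF lin])
  also have "\<dots> = l *\<^sub>R ?A (x1, u1) + (1 - l) *\<^sub>R ?A (x2, u2)"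
    by (simp only: linear_scale[OF lin])
  finally have "?A (l *\<^sub>R (x1, u1) + (1 - l) *\<^sub>R (x2, u2)) = l *\<^sub>R ?A (x1, u1) + (1 - l) *\<^sub>R ?A (x2, u2)" .
  then have "g (l *\<^sub>R x1 + (1 - l) *\<^sub>R x2) (l *\<^sub>R u1 + (1 - l) *\<^sub>R u2) w - g 0 0 w
      = l *\<^sub>R (g x1 u1 w - g 0 0 w) + (1 - l) *\<^sub>R (g x2 u2 w - g 0 0 w)" by simp
  then show ?thesis by (simp add: algebra_simps)
qed

lemma aff_cont:
  fixes g :: "'x::euclidean_space \<Rightarrow> 'u::euclidean_space \<Rightarrow> 'w \<Rightarrow> 'x"
  assumes "affine_xu g"
  shows "continuous_on UNIV (\<lambda>z::('x \<times> 'u) \<times> 'p::euclidean_space. g (fst (fst z)) (snd (fst z)) w)"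
proof -
  let ?A = "\<lambda>(x, u). g x u w - g 0 0 w"
  have lin: "linear ?A" using assms unfolding affine_xu_def by blast
  have "continuous_on UNIV (\<lambda>z::('x \<times> 'u) \<times> 'p. ?A (fst z))"
    by (rule linear_continuous_on_compose[OF _ lin]) (intro continuous_intros)
  then have "continuous_on UNIV (\<lambda>z::('x \<times> 'u) \<times> 'p. ?A (fst z) + g 0 0 w)"
    by (intro continuous_intros)
  then show ?thesis by (simp add: case_prod_unfold)
qed

lemma sum_pos_fin:
  assumes "finite A" "\<And>w. w \<in> A \<Longrightarrow> c w > 0"
  shows "(\<Sum>w\<in>A. ereal (c w) * g w) < \<infinity> \<longleftrightarrow> (\<forall>w\<in>A. g w < \<infinity>)"
proof -
  have "(\<Sum>w\<in>A. ereal (c w) * g w) = \<infinity> \<longleftrightarrow> (\<exists>w\<in>A. ereal (c w) * g w = \<infinity>)"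
    using assms(1) by (simp add: sum_Pinfty)
  also have "\<dots> \<longleftrightarrow> (\<exists>w\<in>A. g w = \<infinity>)"
  proof -
    have "ereal (c w) * g w = \<infinity> \<longleftrightarrow> g w = \<infinity>" if "w \<in> A" for w
      using assms(2)[OF that] by (cases "g w") auto
    then show ?thesis by auto
  qed
  finally show ?thesis by (simp add: less_top[symmetric])
qed

lemma ereal_add_lt_inf: "(a::ereal) + b < \<infinity> \<longleftrightarrow> a < \<infinity> \<and> b < \<infinity>"
  by (cases a; cases b) auto

locale prob2 = prob T f L K W
  for T :: nat
    and f :: "nat \<Rightarrow> 'x::euclidean_space \<Rightarrow> 'u::euclidean_space \<Rightarrow> 'w::euclidean_space \<Rightarrow> 'x"
    and L :: "nat \<Rightarrow> 'x \<Rightarrow> 'u \<Rightarrow> 'w \<Rightarrow> 'p::euclidean_space \<Rightarrow> ereal"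
    and K :: "'x \<Rightarrow> 'p \<Rightarrow> ereal"
    and W :: "nat \<Rightarrow> 'w pmf" +
  assumes A2ii: "\<And>t. t < T \<Longrightarrow> affine_xu (f t)"
    and A2iii: "\<And>t w. t < T \<Longrightarrow> w \<in> set_pmf (W (Suc t)) \<Longrightarrow> GammaK_cls (\<lambda>z. L t (fst z) (snd z) w)"
    and A2iv: "Gamma_cls K"
begin

lemma Q_fin_iff: "t < T \<Longrightarrow> Q t x u p < \<infinity> \<longleftrightarrow> (\<forall>w\<in>S t. L t x u w p < \<infinity> \<and> V (Suc t) (f t x u w) p < \<infinity>)"
proof -
  assume t: "t < T"
  have "Q t x u p < \<infinity> \<longleftrightarrow> (\<forall>w\<in>S t. L t x u w p + V (Suc t) (f t x u w) p < \<infinity>)"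
    unfolding Q_eq by (rule sum_pos_fin[OF finS[OF t] pw_pos])
  then show ?thesis by (simp only: ereal_add_lt_inf)
qed

lemma L_cvx: "t < T \<Longrightarrow> w \<in> S t \<Longrightarrow> cvx (\<lambda>z::('x \<times> 'u) \<times> 'p. L t (fst (fst z)) (snd (fst z)) w (snd z))"
  using A2iii[of t w] unfolding GammaK_cls_def Gamma_cls_def econvex_cvx by (simp add: case_prod_unfold)

lemma L_lsc: "t < T \<Longrightarrow> w \<in> S t \<Longrightarrow> lscf (\<lambda>z::('x \<times> 'u) \<times> 'p. L t (fst (fst z)) (snd (fst z)) w (snd z))"
  using A2iii[of t w] unfolding GammaK_cls_def Gamma_cls_def lsc_fun_lscf by (simp add: case_prod_unfold)

lemma L_K: "t < T \<Longrightarrow> w \<in> S t \<Longrightarrow> \<exists>Kc. compact Kc \<and> (\<forall>x u p. L t x u w p < \<infinity> \<longrightarrow> u \<in> Kc)"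
  using A2iii[of t w] unfolding GammaK_cls_def by auto

definition "Qu t = (\<lambda>z::('x \<times> 'u) \<times> 'p. Q t (fst (fst z)) (snd (fst z)) (snd z))"

context
  fixes t assumes t: "t < T" and GV: "Gamma_cls (V (Suc t))"
begin

lemma V1_ninf: "V (Suc t) x p \<noteq> -\<infinity>"
  using GV unfolding Gamma_cls_def by auto

lemma Q_ninf: "Q t x u p \<noteq> -\<infinity>"
  unfolding Q_eq
  by (intro sum_neq_minf ereal_cmult_neq_minf) (auto simp: L_ninf V1_ninf)

lemma Qu_eq: "Qu t = (\<lambda>z. \<Sum>w\<in>S t. ereal (pw t w) * (L t (fst (fst z)) (snd (fst z)) w (snd z)
      + V (Suc t) (f t (fst (fst z)) (snd (fst z)) w) (snd z)))"
  unfolding Qu_def Q_eq ..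

lemma Vz_cvx: "cvx (\<lambda>z::('x \<times> 'u) \<times> 'p. V (Suc t) (f t (fst (fst z)) (snd (fst z)) w) (snd z))"
proof -
  have cV: "cvx (case_prod (V (Suc t)))" using GV unfolding Gamma_cls_def econvex_cvx by simp
  have aff: "(\<lambda>z::('x \<times> 'u) \<times> 'p. (f t (fst (fst z)) (snd (fst z)) w, snd z)) (l *\<^sub>R z1 + (1 - l) *\<^sub>R z2)
     = l *\<^sub>R (\<lambda>z::('x \<times> 'u) \<times> 'p. (f t (fst (fst z)) (snd (fst z)) w, snd z)) z1
       + (1 - l) *\<^sub>R (\<lambda>z::('x \<times> 'u) \<times> 'p. (f t (fst (fst z)) (snd (fst z)) w, snd z)) z2" for z1 z2 l
    by (simp add: aff_comb[OF A2ii[OF t]])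
  show ?thesis using cvx_comp[OF cV aff] by simp
qed

lemma Vz_lsc: "lscf (\<lambda>z::('x \<times> 'u) \<times> 'p. V (Suc t) (f t (fst (fst z)) (snd (fst z)) w) (snd z))"
proof -
  have lV: "lscf (case_prod (V (Suc t)))" using GV unfolding Gamma_cls_def lsc_fun_lscf by simp
  have co: "continuous_on UNIV (\<lambda>z::('x \<times> 'u) \<times> 'p. (f t (fst (fst z)) (snd (fst z)) w, snd z))"
    by (intro continuous_on_Pair aff_cont[OF A2ii[OF t]] continuous_intros)
  show ?thesis using lscf_comp[OF lV co] by simp
qed

lemma Qu_cvx: "cvx (Qu t)"
  unfolding Qu_eq
  by (intro cvx_sum cvx_cmult cvx_add L_cvx[OF t] Vz_cvx ereal_cmult_neq_minf)
     (auto simp: finS[OF t] L_ninf V1_ninf)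

lemma Qu_lsc: "lscf (Qu t)"
  unfolding Qu_eq lscf_iff
proof
  fix z
  show "lscp (\<lambda>z. \<Sum>w\<in>S t. ereal (pw t w) * (L t (fst (fst z)) (snd (fst z)) w (snd z)
      + V (Suc t) (f t (fst (fst z)) (snd (fst z)) w) (snd z))) z"
  proof -
    have hL: "\<And>w. w \<in> S t \<Longrightarrow> lscp (\<lambda>z. L t (fst (fst z)) (snd (fst z)) w (snd z)) z"
      using L_lsc[OF t] lscf_iff by blast
    have hV: "\<And>w. lscp (\<lambda>z. V (Suc t) (f t (fst (fst z)) (snd (fst z)) w) (snd z)) z"
      using Vz_lsc lscf_iff by blast
    show ?thesis
      by (intro lscp_sum lscp_cmult lscp_add ereal_cmult_neq_minf hL hV)
         (auto simp: finS[OF t] L_ninf V1_ninf)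
  qed
qed

lemma Q_K: "\<exists>Kc. compact Kc \<and> (\<forall>x u p. Q t x u p < \<infinity> \<longrightarrow> u \<in> Kc)"
proof -
  obtain w0 where w0: "w0 \<in> S t" using S_ne by blast
  obtain Kc where Kc: "compact Kc" "\<And>x u p. L t x u w0 p < \<infinity> \<Longrightarrow> u \<in> Kc"
    using L_K[OF t w0] by blast
  have "u \<in> Kc" if "Q t x u p < \<infinity>" for x u p
    using Kc(2)[of x u p] that w0 unfolding Q_fin_iff[OF t] by blast
  then show ?thesis using Kc(1) by blast
qed

lemma US_ne: "US t x p \<noteq> {}"
proof -
  obtain Kc where Kc: "compact Kc" "\<And>x u p. Q t x u p < \<infinity> \<Longrightarrow> u \<in> Kc" using Q_K by blast
  have clo: "closed {u. Q t x u p \<le> ereal c}" for c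
  proof -
    have "closed ((\<lambda>u. ((x, u), p)) -` {z. Qu t z \<le> ereal c})"
      using Qu_lsc unfolding lscf_def by (intro closed_vimage) (auto intro!: continuous_intros)
    then show ?thesis by (simp add: Qu_def vimage_def)
  qed
  obtain u where "Q t x u p = (INF v. Q t x v p)"
    using lsc_attain[of "\<lambda>u. Q t x u p", OF clo Kc(1)] Kc(2) by blast
  then have "u \<in> US t x p" using V_step[OF t] US_of_eq[OF t] by simp
  then show ?thesis by blast
qed

lemma V_Gamma: "Gamma_cls (V t)"
proof -
  have attain: "\<exists>u. Q t x u p = V t x p" for x p
    using US_ne US_eq[OF t] by blast
  have ninf: "V t x p \<noteq> -\<infinity>" for x p
    using attain[of x p] Q_ninf by metis
  have cv: "econvex_fun (V t)"
    unfolding econvex_fun_def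
  proof (intro allI impI)
    fix z1 z2 :: "'x \<times> 'p" and l :: real assume l: "0 < l \<and> l < 1"
    obtain u1 where u1: "Q t (fst z1) u1 (snd z1) = V t (fst z1) (snd z1)" using attain by blast
    obtain u2 where u2: "Q t (fst z2) u2 (snd z2) = V t (fst z2) (snd z2)" using attain by blast
    let ?m = "l *\<^sub>R ((fst z1, u1), snd z1) + (1 - l) *\<^sub>R ((fst z2, u2), snd z2)"
    have "case_prod (V t) (l *\<^sub>R z1 + (1 - l) *\<^sub>R z2) \<le> Qu t ?m"
      unfolding Qu_def using V_le_Q[OF t] by (simp add: case_prod_unfold)
    also have "\<dots> \<le> ereal l * Qu t ((fst z1, u1), snd z1) + ereal (1 - l) * Qu t ((fst z2, u2), snd z2)"
      by (rule Qu_cvx[unfolded cvx_def, rule_format, OF l])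
    also have "\<dots> = ereal l * case_prod (V t) z1 + ereal (1 - l) * case_prod (V t) z2"
      unfolding Qu_def using u1 u2 by (simp add: case_prod_unfold)
    finally show "case_prod (V t) (l *\<^sub>R z1 + (1 - l) *\<^sub>R z2) \<le> ereal l * case_prod (V t) z1 + ereal (1 - l) * case_prod (V t) z2" .
  qed
  have ls: "lsc_fun (V t)"
    unfolding lsc_fun_def
  proof
    fix c :: real
    obtain Kc where Kc: "compact Kc" "\<And>x u p. Q t x u p < \<infinity> \<Longrightarrow> u \<in> Kc" using Q_K by blast
    let ?T = "{z :: 'u \<times> ('x \<times> 'p). Qu t ((fst (snd z), fst z), snd (snd z)) \<le> ereal c}"
    have cT: "closed ?T"
    proof -
      have "closed ((\<lambda>z :: 'u \<times> ('x \<times> 'p). ((fst (snd z), fst z), snd (snd z))) -` {z. Qu t z \<le> ereal c})"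
        using Qu_lsc unfolding lscf_def by (intro closed_vimage) (auto intro!: continuous_intros)
      then show ?thesis by (simp add: vimage_def)
    qed
    have eq: "{z. case_prod (V t) z \<le> ereal c} = {y. \<exists>u. u \<in> Kc \<and> (u, y) \<in> ?T}"
    proof (intro set_eqI iffI)
      fix y :: "'x \<times> 'p" assume "y \<in> {z. case_prod (V t) z \<le> ereal c}"
      then have y: "V t (fst y) (snd y) \<le> ereal c" by (simp add: case_prod_unfold)
      obtain u where u: "Q t (fst y) u (snd y) = V t (fst y) (snd y)" using attain by blast
      have "Q t (fst y) u (snd y) \<le> ereal c" using u y by simp
      then have "Q t (fst y) u (snd y) < \<infinity>" by (rule order.strict_trans1) simp
      then have "u \<in> Kc" by (rule Kc(2))
      then show "y \<in> {y. \<exists>u. u \<in> Kc \<and> (u, y) \<in> ?T}" using u y by (auto simp: Qu_def)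
    next
      fix y :: "'x \<times> 'p" assume "y \<in> {y. \<exists>u. u \<in> Kc \<and> (u, y) \<in> ?T}"
      then obtain u where "Q t (fst y) u (snd y) \<le> ereal c" by (auto simp: Qu_def)
      then show "y \<in> {z. case_prod (V t) z \<le> ereal c}"
        using V_le_Q[OF t, of "fst y" "snd y" u] by (auto simp: case_prod_unfold)
    qed
    show "closed {z. case_prod (V t) z \<le> ereal c}"
      unfolding eq by (rule closed_compact_projection[OF Kc(1) cT])
  qed
  show ?thesis unfolding Gamma_cls_def using ninf cv ls by blast
qed

end

lemma all_Gamma: "t \<le> T \<Longrightarrow> Gamma_cls (V t)"
proof (induction t rule: inc_induct)
  case base then show ?case using A2iv V_T by simp
next
  case (step t) then show ?case using V_Gamma by blast
qed

lemma all_US_ne: "t < T \<Longrightarrow> US t x p \<noteq> {}"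
  using US_ne all_Gamma[of "Suc t"] by simp

lemma Phi_V0: "Phi T f L K W x0 p = V 0 x0 p"
  by (rule Phi_eq) (rule all_US_ne)

lemma V_ninf: "t \<le> T \<Longrightarrow> V t x p \<noteq> -\<infinity>"
  using all_Gamma unfolding Gamma_cls_def by blast

lemma dom_forward:
  assumes "V 0 x0 p < \<infinity>"
  shows "t \<le> T \<Longrightarrow> \<exists>x. V t x p < \<infinity>"
proof (induction t)
  case 0 then show ?case using assms by blast
next
  case (Suc t)
  then obtain x where x: "V t x p < \<infinity>" by auto
  have t: "t < T" using Suc by simp
  have "\<exists>u. Q t x u p < \<infinity>" using x unfolding V_step[OF t] INF_less_iff by blast
  then obtain u where "Q t x u p < \<infinity>" ..
  moreover obtain w0 where "w0 \<in> S t" using S_ne by blast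
  ultimately show ?case using Q_fin_iff[OF t] by blast
qed

end


lemma theta_dom:
  assumes "Theta_cls P g"
  shows "g y p < \<infinity> \<longleftrightarrow> (\<exists>q\<in>P. g y q < \<infinity>) \<and> p \<in> P"
proof -
  obtain Y where Y: "edom g = Y \<times> P" using assms unfolding Theta_cls_def by blast
  have e: "g y p < \<infinity> \<longleftrightarrow> (y, p) \<in> edom g" for y p by (simp add: edom_def)
  have iff: "g y p < \<infinity> \<longleftrightarrow> y \<in> Y \<and> p \<in> P" for y p
    unfolding e Y by simp
  show ?thesis unfolding iff by auto
qed

lemma theta_diff:
  assumes "Theta_cls P g" "g y q < \<infinity>" "p \<in> interior P"
  shows "(\<lambda>q. real_of_ereal (g y q)) differentiable (at p)"
proof -
  obtain Y where Y: "edom g = Y \<times> P"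
      and d: "\<forall>y\<in>Y. \<forall>p\<in>interior P. (\<lambda>q. real_of_ereal (g y q)) differentiable (at p)"
    using assms(1) unfolding Theta_cls_def by blast
  have "(y, q) \<in> edom g" using assms(2) by (simp add: edom_def)
  then have "y \<in> Y" using Y by auto
  then show ?thesis using d assms(3) by blast
qed

lemma theta_intro:
  assumes "Gamma_cls g"
    and dom: "\<And>y p. g y p < \<infinity> \<longleftrightarrow> (\<exists>q\<in>P. g y q < \<infinity>) \<and> p \<in> P"
    and diff: "\<And>y p. p \<in> interior P \<Longrightarrow> g y p < \<infinity> \<Longrightarrow> (\<lambda>q. real_of_ereal (g y q)) differentiable (at p)"
  shows "Theta_cls P g"
proof -
  let ?Y = "{y. \<exists>q\<in>P. g y q < \<infinity>}"
  have m: "(y, p) \<in> edom g \<longleftrightarrow> (y, p) \<in> ?Y \<times> P" for y p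
    using dom[of y p] by (simp add: edom_def)
  have "edom g = ?Y \<times> P"
  proof (rule set_eqI)
    fix z :: "'a \<times> 'b" show "z \<in> edom g \<longleftrightarrow> z \<in> ?Y \<times> P" using m[of "fst z" "snd z"] by simp
  qed
  moreover have "\<forall>y\<in>?Y. \<forall>p\<in>interior P. (\<lambda>q. real_of_ereal (g y q)) differentiable (at p)"
  proof (intro ballI)
    fix y p assume y: "y \<in> ?Y" and p: "p \<in> interior P"
    then obtain q where "q \<in> P" "g y q < \<infinity>" by blast
    moreover have "p \<in> P" using p interior_subset by blast
    ultimately have "g y p < \<infinity>" using dom[of y p] by blast
    then show "(\<lambda>q. real_of_ereal (g y q)) differentiable (at p)" using diff p by blast
  qed
  ultimately show ?thesis unfolding Theta_cls_def using assms(1) by blast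
qed

lemma ereal_fin: "(a::ereal) \<noteq> -\<infinity> \<Longrightarrow> a < \<infinity> \<Longrightarrow> a = ereal (real_of_ereal a)"
  by (cases a) auto

locale prob3 = prob2 T f L K W
  for T :: nat
    and f :: "nat \<Rightarrow> 'x::euclidean_space \<Rightarrow> 'u::euclidean_space \<Rightarrow> 'w::euclidean_space \<Rightarrow> 'x"
    and L :: "nat \<Rightarrow> 'x \<Rightarrow> 'u \<Rightarrow> 'w \<Rightarrow> 'p::euclidean_space \<Rightarrow> ereal"
    and K :: "'x \<Rightarrow> 'p \<Rightarrow> ereal"
    and W :: "nat \<Rightarrow> 'w pmf" +
  fixes P :: "'p set"
  assumes ThL: "\<And>t w. t < T \<Longrightarrow> w \<in> set_pmf (W (Suc t)) \<Longrightarrow> ThetaK_cls P (\<lambda>z. L t (fst z) (snd z) w)"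
    and ThK: "Theta_cls P K"
begin

lemma ThL': "t < T \<Longrightarrow> w \<in> S t \<Longrightarrow> Theta_cls P (\<lambda>z. L t (fst z) (snd z) w)"
  using ThL unfolding ThetaK_cls_def by blast

lemma L_dom: "t < T \<Longrightarrow> w \<in> S t \<Longrightarrow> L t x u w p < \<infinity> \<longleftrightarrow> (\<exists>q\<in>P. L t x u w q < \<infinity>) \<and> p \<in> P"
  using theta_dom[OF ThL', of t w "(x, u)" p] by simp

lemma V_mid:
  assumes tT: "t \<le> T" and fin: "V t x (p + h) < \<infinity>" "V t x (p - h) < \<infinity>"
  shows "2 * real_of_ereal (V t x p) \<le> real_of_ereal (V t x (p + h)) + real_of_ereal (V t x (p - h))"
proof -
  have cv: "cvx (case_prod (V t))" using all_Gamma[OF tT] unfolding Gamma_cls_def econvex_cvx by simp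
  have "case_prod (V t) ((1/2) *\<^sub>R (x, p + h) + (1 - 1/2) *\<^sub>R (x, p - h))
      \<le> ereal (1/2) * case_prod (V t) (x, p + h) + ereal (1 - 1/2) * case_prod (V t) (x, p - h)"
    by (rule cv[unfolded cvx_def, rule_format]) simp
  moreover have "(1/2) *\<^sub>R (x, p + h) + (1 - 1/2) *\<^sub>R (x, p - h) = (x, p)"
  proof -
    have "(1/2::real) *\<^sub>R x + (1/2) *\<^sub>R x = x" by (simp add: scaleR_add_left[symmetric])
    moreover have "(1/2::real) *\<^sub>R (p + h) + (1/2) *\<^sub>R (p - h) = p"
      by (simp add: scaleR_add_right scaleR_diff_right scaleR_add_left[symmetric])
    ultimately show ?thesis by (simp add: prod_eq_iff)
  qed
  ultimately have le: "V t x p \<le> ereal (1/2) * V t x (p + h) + ereal (1/2) * V t x (p - h)" by simp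
  obtain a where a: "V t x (p + h) = ereal a" using fin(1) V_ninf[OF tT, of x "p + h"] by (cases "V t x (p + h)") auto
  obtain b where b: "V t x (p - h) = ereal b" using fin(2) V_ninf[OF tT, of x "p - h"] by (cases "V t x (p - h)") auto
  have le2: "V t x p \<le> ereal (a / 2 + b / 2)" using le unfolding a b by simp
  obtain c where c: "V t x p = ereal c" using le2 V_ninf[OF tT, of x p] by (cases "V t x p") auto
  show ?thesis using le2 unfolding a b c by simp
qed


context
  fixes t assumes t: "t < T" and TH1: "Theta_cls P (V (Suc t))"
begin

definition "Aok x u = (\<forall>w\<in>S t. (\<exists>q\<in>P. L t x u w q < \<infinity>) \<and> (\<exists>q\<in>P. V (Suc t) (f t x u w) q < \<infinity>))"

lemma Q_dom: "Q t x u p < \<infinity> \<longleftrightarrow> Aok x u \<and> p \<in> P"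
proof -
  have w: "(L t x u w p < \<infinity> \<and> V (Suc t) (f t x u w) p < \<infinity>) \<longleftrightarrow>
      ((\<exists>q\<in>P. L t x u w q < \<infinity>) \<and> (\<exists>q\<in>P. V (Suc t) (f t x u w) q < \<infinity>)) \<and> p \<in> P" if "w \<in> S t" for w
    using L_dom[OF t that, of x u p] theta_dom[OF TH1, of "f t x u w" p] by blast
  have "Q t x u p < \<infinity> \<longleftrightarrow> (\<forall>w\<in>S t. ((\<exists>q\<in>P. L t x u w q < \<infinity>) \<and> (\<exists>q\<in>P. V (Suc t) (f t x u w) q < \<infinity>)) \<and> p \<in> P)"
    unfolding Q_fin_iff[OF t] using w by blast
  also have "\<dots> \<longleftrightarrow> Aok x u \<and> p \<in> P" unfolding Aok_def using S_ne by blast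
  finally show ?thesis .
qed

lemma V_dom_t: "V t x p < \<infinity> \<longleftrightarrow> (\<exists>u. Aok x u) \<and> p \<in> P"
proof -
  have "V t x p < \<infinity> \<longleftrightarrow> (\<exists>u. Q t x u p < \<infinity>)" unfolding V_step[OF t] INF_less_iff by simp
  then show ?thesis unfolding Q_dom by blast
qed

lemma V_dom_iff: "V t x p < \<infinity> \<longleftrightarrow> (\<exists>q\<in>P. V t x q < \<infinity>) \<and> p \<in> P"
proof
  assume "V t x p < \<infinity>"
  then show "(\<exists>q\<in>P. V t x q < \<infinity>) \<and> p \<in> P" using V_dom_t[of x p] by blast
next
  assume a: "(\<exists>q\<in>P. V t x q < \<infinity>) \<and> p \<in> P"
  then obtain q where "q \<in> P" "V t x q < \<infinity>" by blast
  then have "\<exists>u. Aok x u" using V_dom_t[of x q] by blast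
  then show "V t x p < \<infinity>" using V_dom_t[of x p] a by blast
qed

lemma grad_step:
  assumes p: "p \<in> interior P" and fin: "V t x p < \<infinity>" and u: "u \<in> US t x p"
  shows "((\<lambda>q. real_of_ereal (V t x q)) has_derivative
     (\<lambda>h. (\<Sum>w\<in>S t. pw t w *\<^sub>R (pgrad (\<lambda>z. L t (fst z) (snd z) w) (x, u) p
                         + pgrad (V (Suc t)) (f t x u w) p)) \<bullet> h)) (at p)"
proof -
  have pP: "p \<in> P" using p interior_subset by blast
  have Qp: "Q t x u p = V t x p" by (rule US_eq[OF t u])
  then have "Aok x u" using fin Q_dom[of x u p] by simp
  then have Qfin: "q \<in> P \<Longrightarrow> Q t x u q < \<infinity>" for q using Q_dom[of x u q] by blast
  have LVfin: "q \<in> P \<Longrightarrow> w \<in> S t \<Longrightarrow> L t x u w q < \<infinity> \<and> V (Suc t) (f t x u w) q < \<infinity>" for q w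
    using Qfin[of q] Q_fin_iff[OF t, of x u q] by blast
  define \<phi> where "\<phi> q = (\<Sum>w\<in>S t. pw t w * (real_of_ereal (L t x u w q) + real_of_ereal (V (Suc t) (f t x u w) q)))" for q
  have Qphi: "Q t x u q = ereal (\<phi> q)" if q: "q \<in> P" for q
  proof -
    have tm: "ereal (pw t w) * (L t x u w q + V (Suc t) (f t x u w) q)
        = ereal (pw t w * (real_of_ereal (L t x u w q) + real_of_ereal (V (Suc t) (f t x u w) q)))" if w: "w \<in> S t" for w
    proof -
      have "L t x u w q = ereal (real_of_ereal (L t x u w q))"
        using LVfin[OF q w] L_ninf by (intro ereal_fin) auto
      moreover have "V (Suc t) (f t x u w) q = ereal (real_of_ereal (V (Suc t) (f t x u w) q))"
        using LVfin[OF q w] V_ninf[of "Suc t"] t by (intro ereal_fin) auto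
      ultimately show ?thesis by (metis plus_ereal.simps(1) times_ereal.simps(1))
    qed
    have "Q t x u q = (\<Sum>w\<in>S t. ereal (pw t w * (real_of_ereal (L t x u w q) + real_of_ereal (V (Suc t) (f t x u w) q))))"
      unfolding Q_eq by (rule sum.cong[OF refl tm])
    also have "\<dots> = ereal (\<phi> q)" unfolding \<phi>_def by (rule sum_ereal)
    finally show ?thesis .
  qed
  have dL: "((\<lambda>q. real_of_ereal (L t x u w q)) has_derivative (\<lambda>h. pgrad (\<lambda>z. L t (fst z) (snd z) w) (x, u) p \<bullet> h)) (at p)"
    if w: "w \<in> S t" for w
  proof -
    have "(\<lambda>q. real_of_ereal ((\<lambda>z. L t (fst z) (snd z) w) (x, u) q)) differentiable (at p)"
      by (rule theta_diff[OF ThL'[OF t w] _ p, of _ p]) (use LVfin[OF pP w] in simp)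
    from pgrad_works[of "\<lambda>z. L t (fst z) (snd z) w" "(x, u)" p, OF this] show ?thesis by simp
  qed
  have dV: "((\<lambda>q. real_of_ereal (V (Suc t) (f t x u w) q)) has_derivative (\<lambda>h. pgrad (V (Suc t)) (f t x u w) p \<bullet> h)) (at p)"
    if w: "w \<in> S t" for w
  proof -
    have "(\<lambda>q. real_of_ereal (V (Suc t) (f t x u w) q)) differentiable (at p)"
      by (rule theta_diff[OF TH1 _ p, of _ p]) (use LVfin[OF pP w] in simp)
    from pgrad_works[of "V (Suc t)" "f t x u w" p, OF this] show ?thesis .
  qed
  have dphi: "(\<phi> has_derivative (\<lambda>h. \<Sum>w\<in>S t. pw t w * (pgrad (\<lambda>z. L t (fst z) (snd z) w) (x, u) p \<bullet> h
        + pgrad (V (Suc t)) (f t x u w) p \<bullet> h))) (at p)"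
    unfolding \<phi>_def[abs_def]
    by (intro has_derivative_sum has_derivative_mult_right has_derivative_add dL dV)
  have Deq: "(\<lambda>h. \<Sum>w\<in>S t. pw t w * (pgrad (\<lambda>z. L t (fst z) (snd z) w) (x, u) p \<bullet> h
        + pgrad (V (Suc t)) (f t x u w) p \<bullet> h))
      = (\<lambda>h. (\<Sum>w\<in>S t. pw t w *\<^sub>R (pgrad (\<lambda>z. L t (fst z) (snd z) w) (x, u) p
                         + pgrad (V (Suc t)) (f t x u w) p)) \<bullet> h)"
    by (rule ext) (simp add: inner_sum_left inner_add_left)
  have tT: "t \<le> T" using t by simp
  have Pfin: "q \<in> P \<Longrightarrow> V t x q < \<infinity>" for q using V_dom_iff[of x q] V_dom_iff[of x p] fin by blast
  show ?thesis
  proof (rule sandwich_deriv[OF open_interior p _ _ _ dphi[unfolded Deq]])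
    fix h assume "p + h \<in> interior P" "p - h \<in> interior P"
    then have "p + h \<in> P" "p - h \<in> P" using interior_subset by blast+
    then show "2 * real_of_ereal (V t x p) \<le> real_of_ereal (V t x (p + h)) + real_of_ereal (V t x (p - h))"
      using V_mid[OF tT] Pfin by blast
  next
    fix q assume "q \<in> interior P"
    then have q: "q \<in> P" using interior_subset by blast
    have "V t x q \<le> ereal (\<phi> q)" using V_le_Q[OF t, of x q u] Qphi[OF q] by simp
    moreover obtain c where "V t x q = ereal c" using Pfin[OF q] V_ninf[OF tT, of x q] by (cases "V t x q") auto
    ultimately show "real_of_ereal (V t x q) \<le> \<phi> q" by simp
  next
    have "V t x p = ereal (\<phi> p)" using Qp Qphi[OF pP] by simp
    then show "real_of_ereal (V t x p) = \<phi> p" by simp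
  qed
qed

lemma TH_step: "Theta_cls P (V t)"
proof (rule theta_intro[OF all_Gamma])
  show "t \<le> T" using t by simp
  show "V t y p < \<infinity> \<longleftrightarrow> (\<exists>q\<in>P. V t y q < \<infinity>) \<and> p \<in> P" for y p by (rule V_dom_iff)
  fix y p assume p: "p \<in> interior P" and fin: "V t y p < \<infinity>"
  obtain u where u: "u \<in> US t y p" using all_US_ne[OF t] by blast
  show "(\<lambda>q. real_of_ereal (V t y q)) differentiable (at p)"
    using grad_step[OF p fin u] by (rule differentiableI)
qed

lemma grad_formula:
  assumes p: "p \<in> interior P" and fin: "V t x p < \<infinity>" and u: "u \<in> US t x p"
  shows "pgrad (V t) x p = (\<Sum>w\<in>S t. pw t w *\<^sub>R (pgrad (\<lambda>z. L t (fst z) (snd z) w) (x, u) p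
                         + pgrad (V (Suc t)) (f t x u w) p))"
  by (rule pgrad_eq[of "V t" x _ p, OF grad_step[OF p fin u]])

end

lemma all_TH: "t \<le> T \<Longrightarrow> Theta_cls P (V t)"
proof (induction t rule: inc_induct)
  case base then show ?case using ThK V_T by simp
next
  case (step t) then show ?case using TH_step by blast
qed

end


theorem theorem2:
  fixes T :: nat
    and f :: "nat \<Rightarrow> 'x::euclidean_space \<Rightarrow> 'u::euclidean_space \<Rightarrow> 'w::euclidean_space \<Rightarrow> 'x"
    and L :: "nat \<Rightarrow> 'x \<Rightarrow> 'u \<Rightarrow> 'w \<Rightarrow> 'p::euclidean_space \<Rightarrow> ereal"
    and K :: "'x \<Rightarrow> 'p \<Rightarrow> ereal"
    and W :: "nat \<Rightarrow> 'w pmf"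
    and x0 :: 'x
    and Pad :: "'p set"
  assumes T: "T \<ge> 1"
    and L_ninf: "\<And>t x u w p. L t x u w p \<noteq> -\<infinity>"
    and K_ninf: "\<And>x p. K x p \<noteq> -\<infinity>"
    \<comment> \<open>(A1): independence is built into the product law used in Phi; finite supports\<close>
    and A1: "\<And>t. t \<in> {1..T} \<Longrightarrow> finite (set_pmf (W t))"
    \<comment> \<open>(A2)\<close>
    and A2i: "\<exists>p\<in>Pad. Phi T f L K W x0 p < \<infinity>"
    and A2ii: "\<And>t. t < T \<Longrightarrow> affine_xu (f t)"
    and A2iii: "\<And>t w. t < T \<Longrightarrow> w \<in> set_pmf (W (Suc t)) \<Longrightarrow>
                   GammaK_cls (\<lambda>z. L t (fst z) (snd z) w)"
    and A2iv: "Gamma_cls K"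
  shows "(\<forall>t\<le>T. proper_fun (Vfun T f L K W t) \<and> Gamma_cls (Vfun T f L K W t))
    \<and> (\<forall>P :: 'p set.
        ((\<forall>t<T. \<forall>w\<in>set_pmf (W (Suc t)). ThetaK_cls P (\<lambda>z. L t (fst z) (snd z) w))
          \<and> Theta_cls P K)
        \<longrightarrow>
          \<comment> \<open>(a)\<close>
          (\<forall>t\<le>T. Theta_cls P (Vfun T f L K W t))
          \<and> (\<forall>p\<in>interior P. \<forall>x. Vfun T f L K W T x p < \<infinity> \<longrightarrow>
                pgrad (Vfun T f L K W T) x p = pgrad K x p)
          \<and> (\<forall>t<T. \<forall>p\<in>interior P. \<forall>x. Vfun T f L K W t x p < \<infinity> \<longrightarrow>
                Usol T f L K W t x p \<noteq> {} \<and>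
                (\<forall>u\<in>Usol T f L K W t x p.
                   pgrad (Vfun T f L K W t) x p =
                     (\<Sum>w\<in>set_pmf (W (Suc t)). pmf (W (Suc t)) w *\<^sub>R
                        (pgrad (\<lambda>z. L t (fst z) (snd z) w) (x, u) p
                         + pgrad (Vfun T f L K W (Suc t)) (f t x u w) p))))
          \<comment> \<open>(b)\<close>
          \<and> (\<forall>Pad'. closed Pad' \<and> convex Pad' \<and> Pad' \<subseteq> P \<longrightarrow>
                (\<forall>p\<in>Pad'. Phi T f L K W x0 p \<noteq> \<infinity> \<and> Phi T f L K W x0 p \<noteq> -\<infinity>)
                \<and> convex_on Pad' (\<lambda>p. real_of_ereal (Phi T f L K W x0 p))
                \<and> (\<forall>p\<in>interior P. (\<lambda>q. real_of_ereal (Phi T f L K W x0 q)) differentiable (at p))))"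
proof -
  interpret prob2 T f L K W
    using L_ninf K_ninf A1 A2ii A2iii A2iv by unfold_locales auto
  obtain p0 where p0: "p0 \<in> Pad" "Phi T f L K W x0 p0 < \<infinity>" using A2i by blast
  have v0fin: "V 0 x0 p0 < \<infinity>" using Phi_ge[of x0 p0] p0(2) by (rule order.strict_trans1)
  have part1: "\<forall>t\<le>T. proper_fun (V t) \<and> Gamma_cls (V t)"
  proof (intro allI impI conjI)
    fix t assume tT: "t \<le> T"
    show "Gamma_cls (V t)" by (rule all_Gamma[OF tT])
    obtain x where "V t x p0 < \<infinity>" using dom_forward[OF v0fin tT] by blast
    then have "(x, p0) \<in> edom (V t)" by (simp add: edom_def)
    then show "proper_fun (V t)" unfolding proper_fun_def using V_ninf[OF tT] by blast
  qed
  have part2: "((\<forall>t<T. \<forall>w\<in>set_pmf (W (Suc t)). ThetaK_cls P (\<lambda>z. L t (fst z) (snd z) w))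
          \<and> Theta_cls P K)
        \<longrightarrow>
          (\<forall>t\<le>T. Theta_cls P (Vfun T f L K W t))
          \<and> (\<forall>p\<in>interior P. \<forall>x. Vfun T f L K W T x p < \<infinity> \<longrightarrow>
                pgrad (Vfun T f L K W T) x p = pgrad K x p)
          \<and> (\<forall>t<T. \<forall>p\<in>interior P. \<forall>x. Vfun T f L K W t x p < \<infinity> \<longrightarrow>
                Usol T f L K W t x p \<noteq> {} \<and>
                (\<forall>u\<in>Usol T f L K W t x p.
                   pgrad (Vfun T f L K W t) x p =
                     (\<Sum>w\<in>set_pmf (W (Suc t)). pmf (W (Suc t)) w *\<^sub>R
                        (pgrad (\<lambda>z. L t (fst z) (snd z) w) (x, u) p
                         + pgrad (Vfun T f L K W (Suc t)) (f t x u w) p))))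
          \<and> (\<forall>Pad'. closed Pad' \<and> convex Pad' \<and> Pad' \<subseteq> P \<longrightarrow>
                (\<forall>p\<in>Pad'. Phi T f L K W x0 p \<noteq> \<infinity> \<and> Phi T f L K W x0 p \<noteq> -\<infinity>)
                \<and> convex_on Pad' (\<lambda>p. real_of_ereal (Phi T f L K W x0 p))
                \<and> (\<forall>p\<in>interior P. (\<lambda>q. real_of_ereal (Phi T f L K W x0 q)) differentiable (at p)))"
    for P :: "'p set"
  proof (intro impI)
    assume hyp: "(\<forall>t<T. \<forall>w\<in>set_pmf (W (Suc t)). ThetaK_cls P (\<lambda>z. L t (fst z) (snd z) w)) \<and> Theta_cls P K"
    interpret prob3 T f L K W P
      using hyp by unfold_locales auto
    have a1: "\<forall>t\<le>T. Theta_cls P (V t)" using all_TH by blast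
    have a2: "\<forall>p\<in>interior P. \<forall>x. V T x p < \<infinity> \<longrightarrow> pgrad (V T) x p = pgrad K x p"
      by (simp add: V_T)
    have a3: "\<forall>t<T. \<forall>p\<in>interior P. \<forall>x. V t x p < \<infinity> \<longrightarrow>
                US t x p \<noteq> {} \<and>
                (\<forall>u\<in>US t x p.
                   pgrad (V t) x p =
                     (\<Sum>w\<in>set_pmf (W (Suc t)). pmf (W (Suc t)) w *\<^sub>R
                        (pgrad (\<lambda>z. L t (fst z) (snd z) w) (x, u) p
                         + pgrad (V (Suc t)) (f t x u w) p)))"
    proof (intro allI impI ballI conjI)
      fix t p x assume t: "t < T" and p: "p \<in> interior P" and fin: "V t x p < \<infinity>"
      show "US t x p \<noteq> {}" by (rule all_US_ne[OF t])
      fix u assume u: "u \<in> US t x p"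
      have TH1: "Theta_cls P (V (Suc t))" using all_TH[of "Suc t"] t by simp
      show "pgrad (V t) x p =
                     (\<Sum>w\<in>set_pmf (W (Suc t)). pmf (W (Suc t)) w *\<^sub>R
                        (pgrad (\<lambda>z. L t (fst z) (snd z) w) (x, u) p
                         + pgrad (V (Suc t)) (f t x u w) p))"
        by (rule grad_formula[OF t TH1 p fin u])
    qed
    have TH0: "Theta_cls P (V 0)" using all_TH[of 0] by simp
    have x0dom: "\<exists>q\<in>P. V 0 x0 q < \<infinity>" using theta_dom[OF TH0, of x0 p0] v0fin by blast
    have finP: "q \<in> P \<Longrightarrow> V 0 x0 q < \<infinity>" for q using theta_dom[OF TH0, of x0 q] x0dom by blast
    have PhiV: "Phi T f L K W x0 q = V 0 x0 q" for q by (rule Phi_V0)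
    have b: "closed Pad' \<and> convex Pad' \<and> Pad' \<subseteq> P \<longrightarrow>
                (\<forall>p\<in>Pad'. Phi T f L K W x0 p \<noteq> \<infinity> \<and> Phi T f L K W x0 p \<noteq> -\<infinity>)
                \<and> convex_on Pad' (\<lambda>p. real_of_ereal (Phi T f L K W x0 p))
                \<and> (\<forall>p\<in>interior P. (\<lambda>q. real_of_ereal (Phi T f L K W x0 q)) differentiable (at p))" for Pad'
    proof (intro impI conjI ballI)
      assume H: "closed Pad' \<and> convex Pad' \<and> Pad' \<subseteq> P"
      fix p assume "p \<in> Pad'"
      then have "p \<in> P" using H by blast
      then have "V 0 x0 p < \<infinity>" by (rule finP)
      then show "Phi T f L K W x0 p \<noteq> \<infinity>" unfolding PhiV by simp
      show "Phi T f L K W x0 p \<noteq> -\<infinity>" unfolding PhiV using V_ninf[of 0] by simp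
    next
      assume H: "closed Pad' \<and> convex Pad' \<and> Pad' \<subseteq> P"
      have cv: "cvx (case_prod (V 0))" using all_Gamma[of 0] unfolding Gamma_cls_def econvex_cvx by simp
      have re: "q \<in> Pad' \<Longrightarrow> V 0 x0 q = ereal (real_of_ereal (V 0 x0 q))" for q
        using finP[of q] H V_ninf[of 0 x0 q] by (intro ereal_fin) auto
      show "convex_on Pad' (\<lambda>p. real_of_ereal (Phi T f L K W x0 p))"
        unfolding convex_on_def PhiV
      proof (intro conjI ballI allI impI)
        show "convex Pad'" using H by blast
        fix y z :: 'p and a b :: real assume y: "y \<in> Pad'" and z: "z \<in> Pad'" and ab: "0 \<le> a" "0 \<le> b" "a + b = 1"
        show "real_of_ereal (V 0 x0 (a *\<^sub>R y + b *\<^sub>R z)) \<le> a * real_of_ereal (V 0 x0 y) + b * real_of_ereal (V 0 x0 z)"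
        proof (cases "a = 0 \<or> b = 0")
          case True
          then show ?thesis using ab by auto
        next
          case False
          then have l: "0 < a \<and> a < 1" and bb: "b = 1 - a" using ab by auto
          have m: "a *\<^sub>R y + b *\<^sub>R z \<in> Pad'" using H y z ab by (auto intro: convexD)
          have "case_prod (V 0) (a *\<^sub>R (x0, y) + (1 - a) *\<^sub>R (x0, z))
              \<le> ereal a * case_prod (V 0) (x0, y) + ereal (1 - a) * case_prod (V 0) (x0, z)"
            by (rule cv[unfolded cvx_def, rule_format, OF l])
          moreover have "a *\<^sub>R (x0, y) + (1 - a) *\<^sub>R (x0, z) = (x0, a *\<^sub>R y + b *\<^sub>R z)"
            using bb by (simp add: prod_eq_iff scaleR_add_left[symmetric])
          ultimately have le: "V 0 x0 (a *\<^sub>R y + b *\<^sub>R z) \<le> ereal a * V 0 x0 y + ereal b * V 0 x0 z"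
            using bb by simp
          obtain c1 where c1: "V 0 x0 (a *\<^sub>R y + b *\<^sub>R z) = ereal c1" using re[OF m] by blast
          obtain c2 where c2: "V 0 x0 y = ereal c2" using re[OF y] by blast
          obtain c3 where c3: "V 0 x0 z = ereal c3" using re[OF z] by blast
          show ?thesis using le unfolding c1 c2 c3 by simp
        qed
      qed
    next
      fix p assume p: "p \<in> interior P"
      obtain q where q: "q \<in> P" "V 0 x0 q < \<infinity>" using x0dom by blast
      have "(\<lambda>q. real_of_ereal (V 0 x0 q)) differentiable (at p)"
        by (rule theta_diff[OF TH0 q(2) p])
      then show "(\<lambda>q. real_of_ereal (Phi T f L K W x0 q)) differentiable (at p)" unfolding PhiV .
    qed
    show "(\<forall>t\<le>T. Theta_cls P (V t))
          \<and> (\<forall>p\<in>interior P. \<forall>x. V T x p < \<infinity> \<longrightarrow> pgrad (V T) x p = pgrad K x p)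
          \<and> (\<forall>t<T. \<forall>p\<in>interior P. \<forall>x. V t x p < \<infinity> \<longrightarrow>
                US t x p \<noteq> {} \<and>
                (\<forall>u\<in>US t x p.
                   pgrad (V t) x p =
                     (\<Sum>w\<in>set_pmf (W (Suc t)). pmf (W (Suc t)) w *\<^sub>R
                        (pgrad (\<lambda>z. L t (fst z) (snd z) w) (x, u) p
                         + pgrad (V (Suc t)) (f t x u w) p))))
          \<and> (\<forall>Pad'. closed Pad' \<and> convex Pad' \<and> Pad' \<subseteq> P \<longrightarrow>
                (\<forall>p\<in>Pad'. Phi T f L K W x0 p \<noteq> \<infinity> \<and> Phi T f L K W x0 p \<noteq> -\<infinity>)
                \<and> convex_on Pad' (\<lambda>p. real_of_ereal (Phi T f L K W x0 p))
                \<and> (\<forall>p\<in>interior P. (\<lambda>q. real_of_ereal (Phi T f L K W x0 q)) differentiable (at p)))"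
      by (intro conjI a1 a2 a3 allI b)
  qed
  show ?thesis by (intro conjI allI part1 part2)
qed


end
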